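(* Let $(\mathcal H,\Delta,\delta,\mu,\mathbf 1,S,\beta)$ be a braided Hopf algebra and let $K:\mathcal H\otimes\mathcal H\to\mathbb C$ be a $\beta$-invariant linear functional. Put $\widetilde K:=K\circ(S\otimes\mathrm{id})\circ\Delta:\mathcal H\to\mathbb C$. If $K\star\mu=\mu\star K$, then $\widetilde K\star\mathrm{id}=\mathrm{id}\star\widetilde K$, i.e. $(\widetilde K\otimes\mathrm{id})\circ\Delta=(\mathrm{id}\otimes\widetilde K)\circ\Delta$ as maps $\mathcal H\to\mathcal H$.
   Context: Braided vector space $(V,\beta)$: $\beta\in\mathrm{Aut}(V\otimes V)$ satisfying the braid equation $(\beta\otimes\mathrm{id})(\mathrm{id}\otimes\beta)(\beta\otimes\mathrm{id})=(\mathrm{id}\otimes\beta)(\beta\otimes\mathrm{id})(\mathrm{id}\otimes\beta)$. $\beta_{m,n}$: $\beta_{0,0}=\mathrm{id}_{\mathbb C}$, $\beta_{1,0}=\beta_{0,1}=\mathrm{id}_V$, $\beta_{1,m+1}=(\mathrm{id}_V\otimes\beta_{1,m})(\beta\otimes\mathrm{id})$, $\beta_{n+1,m}=(\beta_{n,m}\otimes\mathrm{id}_V)(\mathrm{id}\otimes\beta_{1,m})$. $f:V^{\otimes m}\to V^{\otimes n}$ is $\beta$-invariant if $(f\otimes\mathrm{id})\beta_{1,m}=\beta_{1,n}(\mathrm{id}\otimes f)$, $\beta^{-1}$-invariant if $(\mathrm{id}\otimes f)\beta_{m,1}=\beta_{n,1}(f\otimes\mathrm{id})$, $\beta$-compatible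 if both; for a functional $K$ on $V\otimes V$, $\beta$-invariance means $(K\otimes\mathrm{id})\circ\beta_{1,2}=\mathrm{id}\otimes K$. A braided bialgebra $(\mathcal H,\Delta,\delta,\mu,\mathbf 1,\beta)$: unital associative algebra and coassociative counital coalgebra with braiding $\beta$ such that $\mu,\mathbf 1,\Delta,\delta$ are $\beta$-compatible, $\Delta\circ\mu=(\mu\otimes\mu)\circ\Lambda$ with $\Lambda:=(\mathrm{id}\otimes\beta\otimes\mathrm{id})(\Delta\otimes\Delta)$, $\Delta(\mathbf 1)=\mathbf 1\otimes\mathbf 1$, $\delta\circ\mu=\delta\otimes\delta$, $\delta(\mathbf 1)=1$. It is a braided Hopf algebra if there is a linear $S:\mathcal H\to\mathcal H$ with $\mu\circ(S\otimes\mathrm{id})\circ\Delta=\mathbf 1\delta=\mu\circ(\mathrm{id}\otimes S)\circ\Delta$. Convolution: $f\star g=m\circ(f\otimes g)\circ\Delta_{\mathrm{coalg}}$; on $\mathcal H\otimes\mathcal H$ the comultiplication is $\Lambda$, so $K\star\mu=(K\otimes\mu)\circ\Lambda$ and $\mu\star K=(\mu\otimes K)\circ\Lambda$ (identifying $\mathbb C\otimes\mathcal H\cong\mathcal H$). *)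

theory Defs
  imports Complex_Main "HOL-Library.Poly_Mapping"
begin

(* 
  Every complex vector space has a basis, so we take the underlying space of
  H to be the free complex vector space on a basis type 'b.  Then the tensor power
  H^{\<otimes>n} is the free complex vector space on the words of length n over 'b, and we
  let all tensor powers live inside the tensor algebra  'b list \<Rightarrow>\<^sub>0 complex
  (finitely supported coefficient functions on words); an element is homogeneous of
  degree n if it is supported on words of length n.  The scalars C = H^{\<otimes>0} are spanned
  by the empty word, so the identifications C \<otimes> H = H = H \<otimes> C and the associativity of
  tensor products are strict (concatenation of words).

  A linear map f : H^{\<otimes>m} \<rightarrow> H^{\<otimes>n} is given by its values on the basis words of
  length m (type 'b list \<Rightarrow> tens); it is extended linearly by lapp.
 *)

type_synonym 'b tens = "'b list \<Rightarrow>\<^sub>0 complex"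
type_synonym 'b lmap = "'b list \<Rightarrow> 'b tens"

definition lapp :: "'b lmap \<Rightarrow> 'b tens \<Rightarrow> 'b tens" where
  "lapp f v = (\<Sum>w\<in>Poly_Mapping.keys v. Poly_Mapping.map (\<lambda>z. Poly_Mapping.lookup v w * z) (f w))"

definition tmul :: "'b tens \<Rightarrow> 'b tens \<Rightarrow> 'b tens" where
  "tmul u v = (\<Sum>x\<in>Poly_Mapping.keys u. \<Sum>y\<in>Poly_Mapping.keys v. Poly_Mapping.single (x @ y) (Poly_Mapping.lookup u x * Poly_Mapping.lookup v y))"

definition lcomp :: "'b lmap \<Rightarrow> 'b lmap \<Rightarrow> 'b lmap" where
  "lcomp g f = (\<lambda>w. lapp g (f w))"

definition lid :: "'b lmap" where
  "lid = (\<lambda>w. Poly_Mapping.single w 1)"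

definition ltens :: "nat \<Rightarrow> 'b lmap \<Rightarrow> 'b lmap \<Rightarrow> 'b lmap" where
  "ltens m f g = (\<lambda>w. tmul (f (take m w)) (g (drop m w)))"

definition is_map :: "nat \<Rightarrow> nat \<Rightarrow> 'b lmap \<Rightarrow> bool" where
  "is_map m n f \<longleftrightarrow> (\<forall>w. length w = m \<longrightarrow> (\<forall>x\<in>Poly_Mapping.keys (f w). length x = n))"

definition map_eq :: "nat \<Rightarrow> 'b lmap \<Rightarrow> 'b lmap \<Rightarrow> bool" where
  "map_eq m f g \<longleftrightarrow> (\<forall>w. length w = m \<longrightarrow> f w = g w)"

definition braid_eq :: "'b lmap \<Rightarrow> bool" where
  "braid_eq \<beta> \<longleftrightarrow>
     map_eq 3 (lcomp (ltens 2 \<beta> lid) (lcomp (ltens 1 lid \<beta>) (ltens 2 \<beta> lid)))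
              (lcomp (ltens 1 lid \<beta>) (lcomp (ltens 2 \<beta> lid) (ltens 1 lid \<beta>)))"

definition braiding :: "'b lmap \<Rightarrow> bool" where
  "braiding \<beta> \<longleftrightarrow> is_map 2 2 \<beta> \<and>
     (\<exists>\<gamma>. is_map 2 2 \<gamma> \<and> map_eq 2 (lcomp \<beta> \<gamma>) lid \<and> map_eq 2 (lcomp \<gamma> \<beta>) lid) \<and>
     braid_eq \<beta>"

fun beta1 :: "'b lmap \<Rightarrow> nat \<Rightarrow> 'b lmap" where
  "beta1 \<beta> 0 = lid"
| "beta1 \<beta> (Suc m) = lcomp (ltens 1 lid (beta1 \<beta> m)) (ltens 2 \<beta> lid)"

(* \<beta>_{n,m}; \<beta>_{0,m} is the identity (this is forced by the recursion for n = 0) *)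
fun betanm :: "'b lmap \<Rightarrow> nat \<Rightarrow> nat \<Rightarrow> 'b lmap" where
  "betanm \<beta> 0 m = lid"
| "betanm \<beta> (Suc 0) m = beta1 \<beta> m"
| "betanm \<beta> (Suc (Suc n)) m =
     lcomp (ltens (Suc n + m) (betanm \<beta> (Suc n) m) lid) (ltens (Suc n) lid (beta1 \<beta> m))"

definition beta_inv :: "'b lmap \<Rightarrow> nat \<Rightarrow> nat \<Rightarrow> 'b lmap \<Rightarrow> bool" where
  "beta_inv \<beta> m n f \<longleftrightarrow>
     map_eq (Suc m) (lcomp (ltens m f lid) (betanm \<beta> 1 m)) (lcomp (betanm \<beta> 1 n) (ltens 1 lid f))"

definition beta_inv_inv :: "'b lmap \<Rightarrow> nat \<Rightarrow> nat \<Rightarrow> 'b lmap \<Rightarrow> bool" where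
  "beta_inv_inv \<beta> m n f \<longleftrightarrow>
     map_eq (Suc m) (lcomp (ltens 1 lid f) (betanm \<beta> m 1)) (lcomp (betanm \<beta> n 1) (ltens m f lid))"

definition beta_compat :: "'b lmap \<Rightarrow> nat \<Rightarrow> nat \<Rightarrow> 'b lmap \<Rightarrow> bool" where
  "beta_compat \<beta> m n f \<longleftrightarrow> beta_inv \<beta> m n f \<and> beta_inv_inv \<beta> m n f"

definition Lam :: "'b lmap \<Rightarrow> 'b lmap \<Rightarrow> 'b lmap" where
  "Lam \<beta> \<Delta> = lcomp (ltens 3 (ltens 1 lid \<beta>) lid) (ltens 1 \<Delta> \<Delta>)"

(* braided bialgebra (H, \<Delta>, \<delta>, \<mu>, 1, \<beta>); the unit 1 : C \<rightarrow> H is the map u *)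
definition braided_bialgebra ::
  "'b lmap \<Rightarrow> 'b lmap \<Rightarrow> 'b lmap \<Rightarrow> 'b lmap \<Rightarrow> 'b lmap \<Rightarrow> bool" where
  "braided_bialgebra \<Delta> \<delta> \<mu> u \<beta> \<longleftrightarrow>
     braiding \<beta> \<and>
     is_map 1 2 \<Delta> \<and> is_map 1 0 \<delta> \<and> is_map 2 1 \<mu> \<and> is_map 0 1 u \<and>
     \<comment> \<open>unital associative algebra\<close>
     map_eq 3 (lcomp \<mu> (ltens 2 \<mu> lid)) (lcomp \<mu> (ltens 1 lid \<mu>)) \<and>
     map_eq 1 (lcomp \<mu> (ltens 0 u lid)) lid \<and>
     map_eq 1 (lcomp \<mu> (ltens 1 lid u)) lid \<and>
     \<comment> \<open>coassociative counital coalgebra\<close>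
     map_eq 1 (lcomp (ltens 1 \<Delta> lid) \<Delta>) (lcomp (ltens 1 lid \<Delta>) \<Delta>) \<and>
     map_eq 1 (lcomp (ltens 1 \<delta> lid) \<Delta>) lid \<and>
     map_eq 1 (lcomp (ltens 1 lid \<delta>) \<Delta>) lid \<and>
     \<comment> \<open>\<beta>-compatibility of the structure maps\<close>
     beta_compat \<beta> 2 1 \<mu> \<and> beta_compat \<beta> 0 1 u \<and>
     beta_compat \<beta> 1 2 \<Delta> \<and> beta_compat \<beta> 1 0 \<delta> \<and>
     \<comment> \<open>compatibility of product and coproduct\<close>
     map_eq 2 (lcomp \<Delta> \<mu>) (lcomp (ltens 2 \<mu> \<mu>) (Lam \<beta> \<Delta>)) \<and>
     map_eq 0 (lcomp \<Delta> u) (ltens 0 u u) \<and>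
     map_eq 2 (lcomp \<delta> \<mu>) (ltens 1 \<delta> \<delta>) \<and>
     map_eq 0 (lcomp \<delta> u) lid"

definition braided_hopf ::
  "'b lmap \<Rightarrow> 'b lmap \<Rightarrow> 'b lmap \<Rightarrow> 'b lmap \<Rightarrow> 'b lmap \<Rightarrow> 'b lmap \<Rightarrow> bool" where
  "braided_hopf \<Delta> \<delta> \<mu> u S \<beta> \<longleftrightarrow>
     braided_bialgebra \<Delta> \<delta> \<mu> u \<beta> \<and> is_map 1 1 S \<and>
     map_eq 1 (lcomp \<mu> (lcomp (ltens 1 S lid) \<Delta>)) (lcomp u \<delta>) \<and>
     map_eq 1 (lcomp \<mu> (lcomp (ltens 1 lid S) \<Delta>)) (lcomp u \<delta>)"

end

theory Submission
  imports Defs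
begin

definition smult :: "complex \<Rightarrow> 'b tens \<Rightarrow> 'b tens" where
  "smult c p = Poly_Mapping.map (\<lambda>z. c * z) p"

lemma lookup_smult[simp]: "Poly_Mapping.lookup (smult c p) k = c * Poly_Mapping.lookup p k"
  by (simp add: smult_def Poly_Mapping.map.rep_eq when_def)

lemma smult_add_right: "smult c (p + q) = smult c p + smult c q"
  by (rule poly_mapping_eqI) (simp add: lookup_add algebra_simps)
lemma smult_add_left: "smult (a + b) p = smult a p + smult b p"
  by (rule poly_mapping_eqI) (simp add: lookup_add algebra_simps)
lemma smult_zero_right[simp]: "smult c 0 = 0"
  by (rule poly_mapping_eqI) simp
lemma smult_zero_left[simp]: "smult 0 p = 0"
  by (rule poly_mapping_eqI) simp
lemma smult_one[simp]: "smult 1 p = p"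
  by (rule poly_mapping_eqI) simp
lemma smult_smult[simp]: "smult a (smult b p) = smult (a * b) p"
  by (rule poly_mapping_eqI) simp
lemma smult_single[simp]: "smult c (Poly_Mapping.single w a) = Poly_Mapping.single w (c * a)"
  by (rule poly_mapping_eqI) (simp add: lookup_single when_def)
lemma smult_sum: "smult c (\<Sum>i\<in>I. g i) = (\<Sum>i\<in>I. smult c (g i))"
  by (rule poly_mapping_eqI) (simp add: lookup_sum sum_distrib_left)
lemma keys_smult: "Poly_Mapping.keys (smult c p) \<subseteq> Poly_Mapping.keys p"
  by (auto simp: in_keys_iff)

lemma expand: "v = (\<Sum>w\<in>Poly_Mapping.keys v. Poly_Mapping.single w (Poly_Mapping.lookup v w))"
proof (rule poly_mapping_eqI)
  fix k
  show "Poly_Mapping.lookup v k = Poly_Mapping.lookup (\<Sum>w\<in>Poly_Mapping.keys v. Poly_Mapping.single w (Poly_Mapping.lookup v w)) k"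
    by (simp add: lookup_sum lookup_single when_def in_keys_iff)
qed

lemma lapp_alt: "lapp f v = (\<Sum>w\<in>Poly_Mapping.keys v. smult (Poly_Mapping.lookup v w) (f w))"
  by (simp add: lapp_def smult_def)

lemma lapp_superset:
  assumes "finite A" "Poly_Mapping.keys v \<subseteq> A"
  shows "lapp f v = (\<Sum>w\<in>A. smult (Poly_Mapping.lookup v w) (f w))"
  unfolding lapp_alt
  by (rule sum.mono_neutral_left) (use assms in \<open>auto simp: in_keys_iff\<close>)

lemma lapp_add: "lapp f (v1 + v2) = lapp f v1 + lapp f v2"
proof -
  let ?A = "Poly_Mapping.keys v1 \<union> Poly_Mapping.keys v2"
  have "Poly_Mapping.keys (v1 + v2) \<subseteq> ?A" by (rule keys_add)
  then have "lapp f (v1 + v2) = (\<Sum>w\<in>?A. smult (Poly_Mapping.lookup (v1+v2) w) (f w))"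
    by (intro lapp_superset) auto
  also have "\<dots> = (\<Sum>w\<in>?A. smult (Poly_Mapping.lookup v1 w) (f w)) + (\<Sum>w\<in>?A. smult (Poly_Mapping.lookup v2 w) (f w))"
    by (simp add: lookup_add smult_add_left sum.distrib)
  also have "\<dots> = lapp f v1 + lapp f v2"
    by (subst (1 2) lapp_superset[where A="?A"]) auto
  finally show ?thesis .
qed

lemma lapp_zero[simp]: "lapp f 0 = 0"
  by (simp add: lapp_alt)

lemma lapp_smult: "lapp f (smult c v) = smult c (lapp f v)"
proof -
  have "lapp f (smult c v) = (\<Sum>w\<in>Poly_Mapping.keys v. smult (Poly_Mapping.lookup (smult c v) w) (f w))"
    by (intro lapp_superset keys_smult) simp
  then show ?thesis by (simp add: lapp_alt smult_sum)
qed

lemma lapp_sum: "lapp f (\<Sum>i\<in>I. g i) = (\<Sum>i\<in>I. lapp f (g i))"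
  by (induction I rule: infinite_finite_induct) (auto simp: lapp_add)

lemma lapp_single[simp]: "lapp f (Poly_Mapping.single w c) = smult c (f w)"
  by (subst lapp_superset[where A="{w}"]) auto

lemma lapp_lcomp: "lapp (lcomp g f) v = lapp g (lapp f v)"
proof -
  have "lapp g (lapp f v) = lapp g (\<Sum>w\<in>Poly_Mapping.keys v. smult (Poly_Mapping.lookup v w) (f w))"
    by (simp only: lapp_alt[of f v])
  also have "\<dots> = (\<Sum>w\<in>Poly_Mapping.keys v. smult (Poly_Mapping.lookup v w) (lapp g (f w)))"
    by (simp only: lapp_sum lapp_smult)
  moreover have "lapp (lcomp g f) v = (\<Sum>w\<in>Poly_Mapping.keys v. smult (Poly_Mapping.lookup v w) (lapp g (f w)))"
    unfolding lapp_alt[of "lcomp g f" v] by (simp add: lcomp_def)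
  ultimately show ?thesis by simp
qed

lemma lcomp_assoc: "lcomp h (lcomp g f) = lcomp (lcomp h g) f"
  by (rule ext) (simp only: lcomp_def lapp_lcomp[unfolded lcomp_def])

lemma lapp_lid[simp]: "lapp lid v = v"
  by (simp add: lapp_alt lid_def) (rule expand[symmetric])

lemma lcomp_lid_left[simp]: "lcomp lid f = f"
  by (rule ext) (simp add: lcomp_def)
lemma lcomp_lid_right[simp]: "lcomp f lid = f"
  by (rule ext) (simp add: lcomp_def lid_def)

lemma tmul_superset:
  assumes "finite A" "Poly_Mapping.keys u \<subseteq> A" "finite B" "Poly_Mapping.keys v \<subseteq> B"
  shows "tmul u v = (\<Sum>x\<in>A. \<Sum>y\<in>B. Poly_Mapping.single (x @ y) (Poly_Mapping.lookup u x * Poly_Mapping.lookup v y))"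
proof -
  have "tmul u v = (\<Sum>x\<in>A. \<Sum>y\<in>Poly_Mapping.keys v. Poly_Mapping.single (x @ y) (Poly_Mapping.lookup u x * Poly_Mapping.lookup v y))"
    unfolding tmul_def
    by (rule sum.mono_neutral_left) (use assms in \<open>auto simp: in_keys_iff\<close>)
  show ?thesis
    unfolding \<open>tmul u v = _\<close>
    by (rule sum.cong[OF refl], rule sum.mono_neutral_left) (use assms in \<open>auto simp: in_keys_iff\<close>)
qed

lemma tmul_single_single[simp]: "tmul (Poly_Mapping.single x a) (Poly_Mapping.single y b) = Poly_Mapping.single (x @ y) (a * b)"
  by (subst tmul_superset[where A="{x}" and B="{y}"]) auto

lemma tmul_add_left: "tmul (u1 + u2) v = tmul u1 v + tmul u2 v"
proof -
  let ?A = "Poly_Mapping.keys u1 \<union> Poly_Mapping.keys u2"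
  have k: "Poly_Mapping.keys (u1 + u2) \<subseteq> ?A" by (rule keys_add)
  show ?thesis
    apply (subst (1 2 3) tmul_superset[where A="?A" and B="Poly_Mapping.keys v"])
    using k by (auto simp: lookup_add distrib_right single_add sum.distrib)
qed

lemma tmul_add_right: "tmul u (v1 + v2) = tmul u v1 + tmul u v2"
proof -
  let ?B = "Poly_Mapping.keys v1 \<union> Poly_Mapping.keys v2"
  have k: "Poly_Mapping.keys (v1 + v2) \<subseteq> ?B" by (rule keys_add)
  show ?thesis
    apply (subst (1 2 3) tmul_superset[where B="?B" and A="Poly_Mapping.keys u"])
    using k by (auto simp: lookup_add distrib_left single_add sum.distrib)
qed

lemma tmul_zero_left[simp]: "tmul 0 v = 0" by (simp add: tmul_def)
lemma tmul_zero_right[simp]: "tmul u 0 = 0" by (simp add: tmul_def)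

lemma tmul_sum_left: "tmul (\<Sum>i\<in>I. g i) v = (\<Sum>i\<in>I. tmul (g i) v)"
  by (induction I rule: infinite_finite_induct) (auto simp: tmul_add_left)
lemma tmul_sum_right: "tmul u (\<Sum>i\<in>I. g i) = (\<Sum>i\<in>I. tmul u (g i))"
  by (induction I rule: infinite_finite_induct) (auto simp: tmul_add_right)

lemma tmul_smult_left: "tmul (smult c u) v = smult c (tmul u v)"
  apply (subst (1 2) tmul_superset[where A="Poly_Mapping.keys u" and B="Poly_Mapping.keys v"])
  using keys_smult by (auto simp: smult_sum mult.assoc)
lemma tmul_smult_right: "tmul u (smult c v) = smult c (tmul u v)"
  apply (subst (1 2) tmul_superset[where A="Poly_Mapping.keys u" and B="Poly_Mapping.keys v"])
  using keys_smult by (auto simp: smult_sum mult.assoc mult.left_commute)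

definition ctx :: "'b list \<Rightarrow> 'b tens \<Rightarrow> 'b list \<Rightarrow> 'b tens" where
  "ctx p v s = tmul (Poly_Mapping.single p 1) (tmul v (Poly_Mapping.single s 1))"

lemma ctx_expand: "ctx p v s = (\<Sum>y\<in>Poly_Mapping.keys v. Poly_Mapping.single (p @ y @ s) (Poly_Mapping.lookup v y))"
proof -
  have "tmul v (Poly_Mapping.single s 1) = (\<Sum>y\<in>Poly_Mapping.keys v. Poly_Mapping.single (y @ s) (Poly_Mapping.lookup v y))"
    by (simp add: tmul_def)
  then show ?thesis by (simp add: ctx_def tmul_sum_right)
qed

lemma ctx_single[simp]: "ctx p (Poly_Mapping.single x c) s = Poly_Mapping.single (p @ x @ s) c"
  by (simp add: ctx_def)

lemma ctx_add: "ctx p (v1 + v2) s = ctx p v1 s + ctx p v2 s"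
  by (simp add: ctx_def tmul_add_left tmul_add_right)
lemma ctx_zero[simp]: "ctx p 0 s = 0"
  by (simp add: ctx_def)
lemma ctx_sum: "ctx p (\<Sum>i\<in>I. g i) s = (\<Sum>i\<in>I. ctx p (g i) s)"
  by (induction I rule: infinite_finite_induct) (auto simp: ctx_add)
lemma ctx_smult: "ctx p (smult c v) s = smult c (ctx p v s)"
  by (simp add: ctx_def tmul_smult_left tmul_smult_right)

lemma lapp_ctx: "lapp h (ctx p v s) = (\<Sum>y\<in>Poly_Mapping.keys v. smult (Poly_Mapping.lookup v y) (h (p @ y @ s)))"
  by (simp add: ctx_expand lapp_sum)

lemma ctx_lapp: "ctx p (lapp f v) s = (\<Sum>w\<in>Poly_Mapping.keys v. smult (Poly_Mapping.lookup v w) (ctx p (f w) s))"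
  by (simp add: lapp_alt ctx_sum ctx_smult)

lemma ctx_nil: "ctx [] v [] = v"
  by (simp add: ctx_expand) (rule expand[symmetric])

lemma ctx_ctx: "ctx p (ctx a v b) r = ctx (p @ a) v (b @ r)"
  by (simp add: ctx_expand[of a v b] ctx_sum) (simp add: ctx_expand)

lemma keys_ctx: "Poly_Mapping.keys (ctx p v s) \<subseteq> {p @ y @ s | y. y \<in> Poly_Mapping.keys v}"
proof -
  have "Poly_Mapping.keys (ctx p v s) \<subseteq> (\<Union>y\<in>Poly_Mapping.keys v. Poly_Mapping.keys (Poly_Mapping.single (p @ y @ s) (Poly_Mapping.lookup v y)))"
    unfolding ctx_expand by (rule keys_sum)
  also have "\<dots> \<subseteq> {p @ y @ s | y. y \<in> Poly_Mapping.keys v}" by auto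
  finally show ?thesis .
qed

lemma keys_lapp: "Poly_Mapping.keys (lapp g v) \<subseteq> (\<Union>w\<in>Poly_Mapping.keys v. Poly_Mapping.keys (g w))"
proof -
  have "Poly_Mapping.keys (lapp g v) \<subseteq> (\<Union>w\<in>Poly_Mapping.keys v. Poly_Mapping.keys (smult (Poly_Mapping.lookup v w) (g w)))"
    unfolding lapp_alt by (rule keys_sum)
  also have "\<dots> \<subseteq> (\<Union>w\<in>Poly_Mapping.keys v. Poly_Mapping.keys (g w))"
    using keys_smult by fastforce
  finally show ?thesis .
qed

definition L :: "nat \<Rightarrow> nat \<Rightarrow> 'b lmap \<Rightarrow> 'b lmap" where
  "L i k f = (\<lambda>w. ctx (take i w) (f (take k (drop i w))) (drop (i + k) w))"

lemma L_app: "length a = i \<Longrightarrow> length b = k \<Longrightarrow> L i k f (a @ b @ c) = ctx a (f b) c"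
  by (simp add: L_def)

lemma split3_eq: "take i w @ take k (drop i w) @ drop (i + k) w = w"
  by (metis append.assoc append_take_drop_id drop_drop add.commute take_add)

lemma split3:
  assumes "i + k \<le> length w"
  obtains a b c where "w = a @ b @ c" "length a = i" "length b = k"
proof
  show "w = take i w @ take k (drop i w) @ drop (i + k) w"
    by (metis append.assoc append_take_drop_id drop_drop add.commute take_add)
qed (use assms in auto)

lemma map_eq_refl[simp]: "map_eq n f f" by (simp add: map_eq_def)
lemma map_eq_sym: "map_eq n f g \<Longrightarrow> map_eq n g f" by (simp add: map_eq_def)
lemma map_eq_trans[trans]: "map_eq n f g \<Longrightarrow> map_eq n g h \<Longrightarrow> map_eq n f h" by (simp add: map_eq_def)

lemma L_cong: "map_eq k f g \<Longrightarrow> i + k \<le> n \<Longrightarrow> map_eq n (L i k f) (L i k g)"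
  by (auto simp: map_eq_def L_def)

lemma is_map_L: "is_map k k' f \<Longrightarrow> i + k \<le> n \<Longrightarrow> is_map n (n + k' - k) (L i k f)"
  unfolding is_map_def
proof (intro allI impI ballI)
  fix w x
  assume f: "\<forall>w. length w = k \<longrightarrow> (\<forall>x\<in>Poly_Mapping.keys (f w). length x = k')"
    and le: "i + k \<le> n" and w: "length w = n" and x: "x \<in> Poly_Mapping.keys (L i k f w)"
  from le w obtain a b c where abc: "w = a @ b @ c" "length a = i" "length b = k" by (metis split3)
  with x have "x \<in> Poly_Mapping.keys (ctx a (f b) c)" by (simp add: L_app)
  then obtain y where "x = a @ y @ c" "y \<in> Poly_Mapping.keys (f b)" using keys_ctx by blast
  with f abc w show "length x = n + k' - k" by auto
qed

lemma is_map_lcomp: "is_map a b f \<Longrightarrow> is_map b c g \<Longrightarrow> is_map a c (lcomp g f)"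
  unfolding is_map_def lcomp_def
proof (intro allI impI ballI)
  fix w x
  assume f: "\<forall>w. length w = a \<longrightarrow> (\<forall>x\<in>Poly_Mapping.keys (f w). length x = b)"
    and g: "\<forall>w. length w = b \<longrightarrow> (\<forall>x\<in>Poly_Mapping.keys (g w). length x = c)"
    and w: "length w = a" and x: "x \<in> Poly_Mapping.keys (lapp g (f w))"
  from x keys_lapp obtain y where "y \<in> Poly_Mapping.keys (f w)" "x \<in> Poly_Mapping.keys (g y)" by blast
  with f g w show "length x = c" by blast
qed

lemma is_map_lid: "is_map n n lid"
  by (simp add: is_map_def lid_def)

lemma lapp_cong: "(\<forall>x\<in>Poly_Mapping.keys v. length x = m) \<Longrightarrow> map_eq m g g' \<Longrightarrow> lapp g v = lapp g' v"
  unfolding lapp_alt map_eq_def by (rule sum.cong) auto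

lemma lcomp_cong_right: "map_eq m g g' \<Longrightarrow> is_map n m f \<Longrightarrow> map_eq n (lcomp g f) (lcomp g' f)"
  unfolding map_eq_def[of n] lcomp_def is_map_def
proof (intro allI impI)
  fix w :: "'a list" assume a: "map_eq m g g'" "\<forall>w. length w = n \<longrightarrow> (\<forall>x\<in>Poly_Mapping.keys (f w). length x = m)" "length w = n"
  show "lapp g (f w) = lapp g' (f w)" by (rule lapp_cong) (use a in auto)
qed

lemma lcomp_cong_left: "map_eq n f f' \<Longrightarrow> map_eq n (lcomp g f) (lcomp g f')"
  unfolding map_eq_def lcomp_def by auto

lemma L_lcomp:
  assumes f: "is_map k m f" and le: "i + k \<le> n"
  shows "map_eq n (L i k (lcomp g f)) (lcomp (L i m g) (L i k f))"
  unfolding map_eq_def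
proof (intro allI impI)
  fix w :: "'a list" assume w: "length w = n"
  from le w obtain a b c where abc: "w = a @ b @ c" "length a = i" "length b = k" by (metis split3)
  have "L i k (lcomp g f) w = ctx a (lapp g (f b)) c" by (simp add: abc L_app lcomp_def)
  also have "\<dots> = (\<Sum>y\<in>Poly_Mapping.keys (f b). smult (Poly_Mapping.lookup (f b) y) (ctx a (g y) c))"
    by (rule ctx_lapp)
  also have "\<dots> = (\<Sum>y\<in>Poly_Mapping.keys (f b). smult (Poly_Mapping.lookup (f b) y) (L i m g (a @ y @ c)))"
    using f abc by (intro sum.cong refl) (auto simp: is_map_def L_app)
  also have "\<dots> = lcomp (L i m g) (L i k f) w"
    by (simp add: abc L_app lcomp_def lapp_ctx)
  finally show "L i k (lcomp g f) w = lcomp (L i m g) (L i k f) w" .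
qed

lemma L_L:
  assumes "j + l \<le> k" "i + k \<le> n"
  shows "map_eq n (L i k (L j l f)) (L (i + j) l f)"
  unfolding map_eq_def
proof (intro allI impI)
  fix w :: "'a list" assume w: "length w = n"
  from assms w obtain a b c where abc: "w = a @ b @ c" "length a = i" "length b = k" by (metis split3)
  from assms abc obtain b1 b2 b3 where b: "b = b1 @ b2 @ b3" "length b1 = j" "length b2 = l"
    by (metis split3)
  show "L i k (L j l f) w = L (i + j) l f w"
  proof -
    have 1: "L j l f b = ctx b1 (f b2) b3" by (simp only: b(1)) (rule L_app[OF b(2,3)])
    have "L i k (L j l f) w = ctx a (L j l f b) c" by (simp only: abc(1)) (rule L_app[OF abc(2,3)])
    also have "\<dots> = ctx a (ctx b1 (f b2) b3) c" by (simp only: 1)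
    also have "\<dots> = ctx (a @ b1) (f b2) (b3 @ c)" by (rule ctx_ctx)
    also have "\<dots> = L (i + j) l f ((a @ b1) @ b2 @ (b3 @ c))" by (rule L_app[symmetric]) (use abc b in auto)
    finally show ?thesis using abc b by simp
  qed
qed

lemma L_lid[simp]: "L i k lid = lid"
  by (rule ext) (simp add: L_def lid_def split3_eq)

lemma L0: "length w = k \<Longrightarrow> L 0 k f w = f w"
  by (simp add: L_def ctx_nil)

lemma swap_core:
  assumes f: "is_map k k' f" and g: "is_map l l' g" and n1: "i + k + d + l \<le> n"
  shows "map_eq n (lcomp (L (i + k' + d) l g) (L i k f)) (lcomp (L i k f) (L (i + k + d) l g))"
  unfolding map_eq_def
proof (intro allI impI)
  fix w :: "'a list" assume w: "length w = n"
  from n1 w obtain a b r where abr: "w = a @ b @ r" "length a = i" "length b = k"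
    by (metis split3 add.assoc le_add1 order_trans)
  from abr w n1 have "d + l \<le> length r" by simp
  then obtain r1 z r2 where r: "r = r1 @ z @ r2" "length r1 = d" "length z = l"
    by (metis split3 add_0)
  have "lcomp (L (i + k' + d) l g) (L i k f) w
      = (\<Sum>y\<in>Poly_Mapping.keys (f b). smult (Poly_Mapping.lookup (f b) y) (L (i + k' + d) l g (a @ y @ r1 @ z @ r2)))"
    by (simp add: lcomp_def abr r L_app lapp_ctx)
  also have "\<dots> = (\<Sum>y\<in>Poly_Mapping.keys (f b). smult (Poly_Mapping.lookup (f b) y)
        (\<Sum>q\<in>Poly_Mapping.keys (g z). Poly_Mapping.single (a @ y @ r1 @ q @ r2) (Poly_Mapping.lookup (g z) q)))"
  proof (rule sum.cong[OF refl])
    fix y assume y: "y \<in> Poly_Mapping.keys (f b)"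
    then have ly: "length y = k'" using f abr by (auto simp: is_map_def)
    have "L (i + k' + d) l g (a @ y @ r1 @ z @ r2) = L (i + k' + d) l g ((a @ y @ r1) @ z @ r2)" by simp
    also have "\<dots> = ctx (a @ y @ r1) (g z) r2" using ly abr r by (intro L_app) auto
    finally show "smult (Poly_Mapping.lookup (f b) y) (L (i + k' + d) l g (a @ y @ r1 @ z @ r2)) =
        smult (Poly_Mapping.lookup (f b) y) (\<Sum>q\<in>Poly_Mapping.keys (g z). Poly_Mapping.single (a @ y @ r1 @ q @ r2) (Poly_Mapping.lookup (g z) q))"
      by (simp add: ctx_expand)
  qed
  also have "\<dots> = (\<Sum>q\<in>Poly_Mapping.keys (g z). smult (Poly_Mapping.lookup (g z) q)
        (\<Sum>y\<in>Poly_Mapping.keys (f b). Poly_Mapping.single (a @ y @ r1 @ q @ r2) (Poly_Mapping.lookup (f b) y)))"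
    by (simp add: smult_sum mult.commute) (rule sum.swap)
  also have "\<dots> = (\<Sum>q\<in>Poly_Mapping.keys (g z). smult (Poly_Mapping.lookup (g z) q) (L i k f (a @ b @ r1 @ q @ r2)))"
  proof (rule sum.cong[OF refl])
    fix q assume q: "q \<in> Poly_Mapping.keys (g z)"
    have "L i k f (a @ b @ r1 @ q @ r2) = ctx a (f b) (r1 @ q @ r2)" using abr by (intro L_app) auto
    then show "smult (Poly_Mapping.lookup (g z) q) (\<Sum>y\<in>Poly_Mapping.keys (f b). Poly_Mapping.single (a @ y @ r1 @ q @ r2) (Poly_Mapping.lookup (f b) y)) =
        smult (Poly_Mapping.lookup (g z) q) (L i k f (a @ b @ r1 @ q @ r2))"
      by (simp add: ctx_expand)
  qed
  also have "\<dots> = lcomp (L i k f) (L (i + k + d) l g) w"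
  proof -
    have "L (i + k + d) l g w = L (i + k + d) l g ((a @ b @ r1) @ z @ r2)" by (simp add: abr r)
    also have "\<dots> = ctx (a @ b @ r1) (g z) r2" using abr r by (intro L_app) auto
    finally show ?thesis by (simp add: lcomp_def lapp_ctx)
  qed
  finally show "lcomp (L (i + k' + d) l g) (L i k f) w = lcomp (L i k f) (L (i + k + d) l g) w" .
qed

type_synonym 'b layer = "nat \<times> nat \<times> nat \<times> 'b lmap"

fun cl :: "'b layer list \<Rightarrow> 'b lmap" where
  "cl [] = lid"
| "cl ((i, k, k', f) # xs) = lcomp (cl xs) (L i k f)"

fun deg :: "nat \<Rightarrow> 'b layer list \<Rightarrow> nat" where
  "deg n [] = n"
| "deg n ((i, k, k', f) # xs) = deg (n + k' - k) xs"

fun wf :: "nat \<Rightarrow> 'b layer list \<Rightarrow> bool" where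
  "wf n [] = True"
| "wf n ((i, k, k', f) # xs) = (is_map k k' f \<and> i + k \<le> n \<and> wf (n + k' - k) xs)"

definition shift :: "nat \<Rightarrow> 'b layer list \<Rightarrow> 'b layer list" where
  "shift i xs = map (\<lambda>(j, a, b, f). (i + j, a, b, f)) xs"

lemma shift_simps[simp]: "shift i [] = []" "shift i ((j, a, b, f) # xs) = (i + j, a, b, f) # shift i xs"
  by (simp_all add: shift_def)

lemma wf_is_map: "wf n xs \<Longrightarrow> is_map n (deg n xs) (cl xs)"
proof (induction xs arbitrary: n)
  case Nil then show ?case by (simp add: is_map_lid)
next
  case (Cons x xs)
  obtain i k k' f where x: "x = (i, k, k', f)" by (cases x) auto
  from Cons.prems x have "is_map n (n + k' - k) (L i k f)" by (intro is_map_L) auto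
  moreover from Cons x have "is_map (n + k' - k) (deg (n + k' - k) xs) (cl xs)" by auto
  ultimately show ?case using x by (simp add: is_map_lcomp)
qed

lemma cl_append: "cl (xs @ ys) = lcomp (cl ys) (cl xs)"
proof (induction xs)
  case Nil then show ?case by simp
next
  case (Cons x xs) then show ?case by (cases x) (simp add: lcomp_assoc)
qed

lemma deg_append: "deg n (xs @ ys) = deg (deg n xs) ys"
  by (induction n xs rule: deg.induct) auto

lemma wf_append: "wf n (xs @ ys) = (wf n xs \<and> wf (deg n xs) ys)"
  by (induction n xs rule: wf.induct) auto

lemma map_eq_ctx:
  assumes "wf n pre" "map_eq (deg n pre) (cl a) (cl b)"
  shows "map_eq n (cl (pre @ a @ post)) (cl (pre @ b @ post))"
proof -
  have "map_eq n (lcomp (cl a) (cl pre)) (lcomp (cl b) (cl pre))"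
    using assms wf_is_map by (blast intro: lcomp_cong_right)
  then have "map_eq n (lcomp (cl post) (lcomp (cl a) (cl pre))) (lcomp (cl post) (lcomp (cl b) (cl pre)))"
    by (rule lcomp_cong_left)
  then show ?thesis by (simp add: cl_append lcomp_assoc)
qed

lemma cl_shift:
  assumes "wf k xs" "i + k \<le> n"
  shows "map_eq n (cl (shift i xs)) (L i k (cl xs))"
  using assms
proof (induction xs arbitrary: k n)
  case Nil then show ?case by simp
next
  case (Cons x xs)
  obtain j a b f where x: "x = (j, a, b, f)" by (cases x) auto
  from Cons.prems x have f: "is_map a b f" and ja: "j + a \<le> k" and wxs: "wf (k + b - a) xs" by auto
  have Ljf: "is_map k (k + b - a) (L j a f)" using f ja by (rule is_map_L)
  have "map_eq n (L i k (cl (x # xs))) (lcomp (L i (k + b - a) (cl xs)) (L i k (L j a f)))"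
    unfolding x cl.simps using Ljf Cons.prems(2) by (rule L_lcomp)
  also have "map_eq n \<dots> (lcomp (L i (k + b - a) (cl xs)) (L (i + j) a f))"
    using ja Cons.prems by (intro lcomp_cong_left L_L) auto
  also have "map_eq n \<dots> (lcomp (cl (shift i xs)) (L (i + j) a f))"
  proof (rule lcomp_cong_right)
    show "map_eq (n + b - a) (L i (k + b - a) (cl xs)) (cl (shift i xs))"
      by (rule map_eq_sym, rule Cons.IH[OF wxs]) (use Cons.prems ja in arith)
    show "is_map n (n + b - a) (L (i + j) a f)" using f ja Cons.prems by (intro is_map_L) auto
  qed
  finally have "map_eq n (L i k (cl (x # xs))) (lcomp (cl (shift i xs)) (L (i + j) a f))" .
  then show ?case unfolding x by (simp only: shift_simps cl.simps) (rule map_eq_sym)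
qed

lemma axR:
  assumes ax: "map_eq k (cl a) (cl b)" and wa: "wf k a" and wb: "wf k b"
    and wp: "wf n pre" and le: "i + k \<le> deg n pre"
    and xs: "xs = pre @ shift i a @ post" and ys: "ys = pre @ shift i b @ post"
  shows "map_eq n (cl xs) (cl ys)"
proof -
  have "map_eq (deg n pre) (cl (shift i a)) (L i k (cl a))" using wa le by (rule cl_shift)
  also have "map_eq (deg n pre) \<dots> (L i k (cl b))" using ax le by (rule L_cong)
  also have "map_eq (deg n pre) \<dots> (cl (shift i b))" using wb le by (rule map_eq_sym[OF cl_shift])
  finally show ?thesis using xs ys wp map_eq_ctx by blast
qed

lemma axL:
  assumes ax: "map_eq k (cl b) (cl a)" and wa: "wf k a" and wb: "wf k b"
    and wp: "wf n pre" and le: "i + k \<le> deg n pre"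
    and xs: "xs = pre @ shift i a @ post" and ys: "ys = pre @ shift i b @ post"
  shows "map_eq n (cl xs) (cl ys)"
  using axR[OF map_eq_sym[OF ax] wa wb wp le xs ys] .

lemma swapR:
  assumes wp: "wf n pre" and f: "is_map k k' f" and g: "is_map l l' g"
    and ij: "i + k' \<le> j" and jx: "jx = j + k - k'" and le: "jx + l \<le> deg n pre"
    and xs: "xs = pre @ (i, k, k', f) # (j, l, l', g) # post"
    and ys: "ys = pre @ (jx, l, l', g) # (i, k, k', f) # post"
  shows "map_eq n (cl xs) (cl ys)"
proof -
  obtain d where d: "j = i + k' + d" using ij le_Suc_ex by blast
  have "map_eq (deg n pre) (lcomp (L (i + k' + d) l g) (L i k f)) (lcomp (L i k f) (L (i + k + d) l g))"
    using f g le jx d by (intro swap_core) auto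
  moreover have e: "jx = i + k + d" using jx d by simp
  ultimately have "map_eq (deg n pre) (cl [(i, k, k', f), (j, l, l', g)]) (cl [(jx, l, l', g), (i, k, k', f)])"
    by (simp only: d e cl.simps lcomp_lid_left)
  then show ?thesis using map_eq_ctx[OF wp] xs ys by (metis append_Cons append_Nil)
qed

lemma swapL:
  assumes wp: "wf n pre" and f: "is_map k k' f" and g: "is_map l l' g"
    and ji: "j + l \<le> i" and ix: "ix = i + l' - l" and le: "i + k \<le> deg n pre"
    and xs: "xs = pre @ (i, k, k', f) # (j, l, l', g) # post"
    and ys: "ys = pre @ (j, l, l', g) # (ix, k, k', f) # post"
  shows "map_eq n (cl xs) (cl ys)"
proof -
  obtain d where d: "i = j + l + d" using ji le_Suc_ex by blast
  have "map_eq (deg n pre) (lcomp (L (j + l' + d) k f) (L j l g)) (lcomp (L j l g) (L (j + l + d) k f))"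
    using f g le d by (intro swap_core) auto
  moreover have e: "ix = j + l' + d" using ix d by simp
  ultimately have "map_eq (deg n pre) (cl [(i, k, k', f), (j, l, l', g)]) (cl [(j, l, l', g), (ix, k, k', f)])"
    by (simp only: d e cl.simps lcomp_lid_left) (rule map_eq_sym)
  then show ?thesis using map_eq_ctx[OF wp] xs ys by (metis append_Cons append_Nil)
qed

lemma tmul_nil_left[simp]: "tmul (Poly_Mapping.single [] 1) v = v"
  by (subst tmul_superset[where A="{[]}" and B="Poly_Mapping.keys v"]) (auto intro: expand[symmetric])

lemma L_app2: "length a = i \<Longrightarrow> length b = k \<Longrightarrow> L i k f (a @ b) = ctx a (f b) []"
  using L_app[of a i b k f "[]"] by simp

lemma ltens_lid_right: "ltens m f lid = L 0 m f"
  by (rule ext) (simp add: ltens_def L_def lid_def ctx_def)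

lemma ltens_lid_lid: "ltens m lid lid = lid"
  by (rule ext) (simp add: ltens_def lid_def)

lemma ltens_split: "map_eq (m + c) (ltens m f g) (lcomp (L 0 m f) (L m c g))"
  unfolding map_eq_def
proof (intro allI impI)
  fix w :: "'a list" assume w: "length w = m + c"
  then obtain a b e where abe: "w = a @ b @ e" "length a = m" "length b = c"
    by (metis split3 order_refl)
  with w have e: "e = []" by simp
  have "lcomp (L 0 m f) (L m c g) w = lapp (L 0 m f) (ctx a (g b) [])" by (simp add: lcomp_def abe e L_app2)
  also have "\<dots> = (\<Sum>y\<in>Poly_Mapping.keys (g b). smult (Poly_Mapping.lookup (g b) y) (ctx [] (f a) y))"
    using abe by (simp add: lapp_ctx L_app[where a="[]", simplified])
  also have "\<dots> = tmul (f a) (g b)"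
    by (simp add: ctx_expand smult_sum tmul_def mult.commute) (rule sum.swap)
  finally show "ltens m f g w = lcomp (L 0 m f) (L m c g) w"
    using abe e by (simp add: ltens_def)
qed

lemma L0_eq: "map_eq k (L 0 k f) f"
  by (simp add: map_eq_def L0)

lemma ltens_lid_left: "map_eq (m + c) (ltens m lid g) (L m c g)"
proof -
  have "map_eq (m + c) (ltens m lid g) (lcomp (L 0 m lid) (L m c g))" by (rule ltens_split)
  then show ?thesis by simp
qed

lemma lcomp_cong2: "map_eq n f f' \<Longrightarrow> map_eq m g g' \<Longrightarrow> is_map n m f' \<Longrightarrow> map_eq n (lcomp g f) (lcomp g' f')"
  by (metis lcomp_cong_left lcomp_cong_right map_eq_trans)

lemma ltl: "m + c = n \<Longrightarrow> map_eq n (ltens m lid g) (L m c g)"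
  using ltens_lid_left by blast
lemma lsplit: "m + c = n \<Longrightarrow> map_eq n (ltens m f g) (lcomp (L 0 m f) (L m c g))"
  using ltens_split by blast
lemma isL: "is_map k k' f \<Longrightarrow> i + k \<le> n \<Longrightarrow> m = n + k' - k \<Longrightarrow> is_map n m (L i k f)"
  using is_map_L by blast
lemma lcomp_cong2L: "map_eq n f f' \<Longrightarrow> map_eq m g g' \<Longrightarrow> is_map n m f \<Longrightarrow> map_eq n (lcomp g f) (lcomp g' f')"
  by (metis lcomp_cong_left lcomp_cong_right map_eq_trans)
lemma L0_eq': "map_eq k f (L 0 k f)"
  by (rule map_eq_sym[OF L0_eq])
lemma beta1_1: "beta1 \<beta> (Suc 0) = L 0 2 \<beta>"
  by (simp add: ltens_lid_lid ltens_lid_right)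

locale BH =
  fixes \<Delta> \<delta> \<mu> u S \<beta> K :: "'b lmap"
  assumes hopf: "braided_hopf \<Delta> \<delta> \<mu> u S \<beta>"
    and K_fun: "is_map 2 0 K"
    and K_inv: "beta_inv \<beta> 2 0 K"
    and comm: "map_eq 2 (lcomp (ltens 2 K \<mu>) (Lam \<beta> \<Delta>)) (lcomp (ltens 2 \<mu> K) (Lam \<beta> \<Delta>))"
begin

lemma isD[simp]: "is_map 1 2 \<Delta>" and isE[simp]: "is_map 1 0 \<delta>" and isM[simp]: "is_map 2 1 \<mu>"
  and isU[simp]: "is_map 0 1 u" and isS[simp]: "is_map 1 1 S" and isB[simp]: "is_map 2 2 \<beta>"
  and isK[simp]: "is_map 2 0 K"
  using hopf K_fun by (auto simp: braided_hopf_def braided_bialgebra_def braiding_def)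

lemma isD'[simp]: "is_map (Suc 0) (Suc (Suc 0)) \<Delta>" and isE'[simp]: "is_map (Suc 0) 0 \<delta>" and isM'[simp]: "is_map (Suc (Suc 0)) (Suc 0) \<mu>"
  and isU'[simp]: "is_map 0 (Suc 0) u" and isS'[simp]: "is_map (Suc 0) (Suc 0) S" and isB'[simp]: "is_map (Suc (Suc 0)) (Suc (Suc 0)) \<beta>"
  and isK'[simp]: "is_map (Suc (Suc 0)) 0 K"
  using isD isE isM isU isS isB isK by (simp_all add: numeral_2_eq_2)
lemma isM2[simp]: "is_map 2 (Suc 0) \<mu>" "is_map (Suc 0) 2 \<Delta>" "is_map 2 2 \<beta>"
  using isM isD isB by simp_all

lemmas A = hopf[unfolded braided_hopf_def braided_bialgebra_def beta_compat_def beta_inv_def beta_inv_inv_def]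

abbreviation "dD i \<equiv> (i, 1::nat, 2::nat, \<Delta>)"
abbreviation "eE i \<equiv> (i, 1::nat, 0::nat, \<delta>)"
abbreviation "mM i \<equiv> (i, 2::nat, 1::nat, \<mu>)"
abbreviation "uU i \<equiv> (i, 0::nat, 1::nat, u)"
abbreviation "sS i \<equiv> (i, 1::nat, 1::nat, S)"
abbreviation "bB i \<equiv> (i, 2::nat, 2::nat, \<beta>)"
abbreviation "kK i \<equiv> (i, 2::nat, 0::nat, K)"

lemma ax_assoc: "map_eq 3 (cl [mM 0, mM 0]) (cl [mM 1, mM 0])"
proof -
  have "map_eq 3 (cl [mM 0, mM 0]) (lcomp \<mu> (ltens 2 \<mu> lid))"
    by (simp only: cl.simps lcomp_lid_left ltens_lid_right) (rule lcomp_cong2[OF map_eq_refl L0_eq isL[OF isM]], simp_all)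
  also have "map_eq 3 \<dots> (lcomp \<mu> (ltens 1 lid \<mu>))" using A by blast
  also have "map_eq 3 \<dots> (cl [mM 1, mM 0])"
    by (simp only: cl.simps lcomp_lid_left ltens_lid_right) (rule lcomp_cong2[OF ltl L0_eq' isL[OF isM]], simp_all)
  finally show ?thesis .
qed

lemma ax_unitL: "map_eq 1 (cl [uU 0, mM 0]) (cl [])"
proof -
  have "map_eq 1 (cl [uU 0, mM 0]) (lcomp \<mu> (ltens 0 u lid))"
    by (simp only: cl.simps lcomp_lid_left ltens_lid_right) (rule lcomp_cong2[OF map_eq_refl L0_eq isL[OF isU]], simp_all)
  also have "map_eq 1 \<dots> lid" using A by blast
  finally show ?thesis by simp
qed

lemma ax_unitR: "map_eq 1 (cl [uU 1, mM 0]) (cl [])"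
proof -
  have "map_eq 1 (cl [uU 1, mM 0]) (lcomp \<mu> (ltens 1 lid u))"
    by (simp only: cl.simps lcomp_lid_left ltens_lid_right) (rule lcomp_cong2L[OF map_eq_sym[OF ltl] L0_eq isL[OF isU]], simp_all)
  also have "map_eq 1 \<dots> lid" using A by blast
  finally show ?thesis by simp
qed

lemma ax_coassoc: "map_eq 1 (cl [dD 0, dD 0]) (cl [dD 0, dD 1])"
proof -
  have "map_eq 1 (cl [dD 0, dD 0]) (lcomp (ltens 1 \<Delta> lid) \<Delta>)"
    by (simp only: cl.simps lcomp_lid_left ltens_lid_right) (rule lcomp_cong2[OF L0_eq map_eq_refl[of 2]], simp)
  also have "map_eq 1 \<dots> (lcomp (ltens 1 lid \<Delta>) \<Delta>)" using A by blast
  also have "map_eq 1 \<dots> (cl [dD 0, dD 1])"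
    by (simp only: cl.simps lcomp_lid_left ltens_lid_right) (rule lcomp_cong2[OF L0_eq' ltl isL[OF isD]], simp_all)
  finally show ?thesis .
qed

lemma ax_counitL: "map_eq 1 (cl [dD 0, eE 0]) (cl [])"
proof -
  have "map_eq 1 (cl [dD 0, eE 0]) (lcomp (ltens 1 \<delta> lid) \<Delta>)"
    by (simp only: cl.simps lcomp_lid_left ltens_lid_right) (rule lcomp_cong2[OF L0_eq map_eq_refl[of 2]], simp)
  also have "map_eq 1 \<dots> lid" using A by blast
  finally show ?thesis by simp
qed

lemma ax_counitR: "map_eq 1 (cl [dD 0, eE 1]) (cl [])"
proof -
  have "map_eq 1 (cl [dD 0, eE 1]) (lcomp (ltens 1 lid \<delta>) \<Delta>)"
    by (simp only: cl.simps lcomp_lid_left ltens_lid_right) (rule lcomp_cong2[OF L0_eq map_eq_sym[OF ltl[of 1 1 2]]], simp_all)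
  also have "map_eq 1 \<dots> lid" using A by blast
  finally show ?thesis by simp
qed

lemma ax_antipodeL: "map_eq 1 (cl [dD 0, sS 0, mM 0]) (cl [eE 0, uU 0])"
proof -
  have "map_eq 1 (cl [dD 0, sS 0, mM 0]) (lcomp (lcomp \<mu> (ltens 1 S lid)) \<Delta>)"
    by (simp only: cl.simps lcomp_lid_left ltens_lid_right) (rule lcomp_cong2[OF L0_eq lcomp_cong2[OF map_eq_refl L0_eq isL[of 1 1 S 0 2 2]]], simp_all)
  also have "map_eq 1 \<dots> (lcomp u \<delta>)" using A by (simp add: lcomp_assoc)
  also have "map_eq 1 \<dots> (cl [eE 0, uU 0])"
    by (simp only: cl.simps lcomp_lid_left ltens_lid_right) (rule lcomp_cong2[OF L0_eq' L0_eq' isL[OF isE]], simp_all)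
  finally show ?thesis .
qed

lemma ax_antipodeR: "map_eq 1 (cl [dD 0, sS 1, mM 0]) (cl [eE 0, uU 0])"
proof -
  have "map_eq 1 (cl [dD 0, sS 1, mM 0]) (lcomp (lcomp \<mu> (ltens 1 lid S)) \<Delta>)"
    by (simp only: cl.simps lcomp_lid_left ltens_lid_right) (rule lcomp_cong2[OF L0_eq lcomp_cong2L[OF map_eq_sym[OF ltl] L0_eq isL[of 1 1 S 1 2 2]]], simp_all)
  also have "map_eq 1 \<dots> (lcomp u \<delta>)" using A by (simp add: lcomp_assoc)
  also have "map_eq 1 \<dots> (cl [eE 0, uU 0])"
    by (simp only: cl.simps lcomp_lid_left ltens_lid_right) (rule lcomp_cong2[OF L0_eq' L0_eq' isL[OF isE]], simp_all)
  finally show ?thesis .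
qed

lemma Lam_conv: "map_eq 2 (Lam \<beta> \<Delta>) (cl [dD 1, dD 0, bB 1])"
proof -
  have X: "map_eq 4 (ltens 3 (ltens 1 lid \<beta>) lid) (L 1 2 \<beta>)"
  proof -
    have "map_eq 4 (L 0 3 (ltens 1 lid \<beta>)) (L 0 3 (L 1 2 \<beta>))" by (rule L_cong[OF ltl]) simp_all
    also have "map_eq 4 \<dots> (L 1 2 \<beta>)" using L_L[of 1 2 3 0 4 \<beta>] by simp
    finally show ?thesis by (simp add: ltens_lid_right)
  qed
  have "map_eq 2 (Lam \<beta> \<Delta>) (lcomp (L 1 2 \<beta>) (lcomp (L 0 1 \<Delta>) (L 1 1 \<Delta>)))"
    unfolding Lam_def
    by (rule lcomp_cong2[OF lsplit X is_map_lcomp[OF isL[OF isD, of 1 2 3] isL[OF isD, of 0 3 4]]]) simp_all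
  then show ?thesis by (simp add: lcomp_assoc)
qed

lemma m4: "map_eq 4 (ltens 2 \<mu> \<mu>) (cl [mM 2, mM 0])"
  by (simp only: cl.simps lcomp_lid_left) (rule lsplit, simp)
lemma mk4: "map_eq 4 (ltens 2 K \<mu>) (cl [mM 2, kK 0])"
  by (simp only: cl.simps lcomp_lid_left) (rule lsplit, simp)
lemma km4: "map_eq 4 (ltens 2 \<mu> K) (cl [kK 2, mM 0])"
  by (simp only: cl.simps lcomp_lid_left) (rule lsplit, simp)
lemma i4: "is_map 2 4 (cl [dD 1, dD 0, bB 1])"
  using wf_is_map[of 2 "[dD 1, dD 0, bB 1]"] by simp

lemma ax_bialg: "map_eq 2 (cl [mM 0, dD 0]) (cl [dD 1, dD 0, bB 1, mM 2, mM 0])"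
proof -
  have "map_eq 2 (cl [mM 0, dD 0]) (lcomp \<Delta> \<mu>)"
    by (simp only: cl.simps lcomp_lid_left) (rule lcomp_cong2[OF L0_eq L0_eq], simp)
  also have "map_eq 2 \<dots> (lcomp (ltens 2 \<mu> \<mu>) (Lam \<beta> \<Delta>))" using A by blast
  also have "map_eq 2 \<dots> (lcomp (cl [mM 2, mM 0]) (cl [dD 1, dD 0, bB 1]))"
    by (rule lcomp_cong2[OF Lam_conv m4 i4])
  also have "lcomp (cl [mM 2, mM 0]) (cl [dD 1, dD 0, bB 1]) = cl ([dD 1, dD 0, bB 1] @ [mM 2, mM 0])"
    by (rule cl_append[symmetric])
  finally show ?thesis by simp
qed

lemma ax_comm: "map_eq 2 (cl [dD 1, dD 0, bB 1, mM 2, kK 0]) (cl [dD 1, dD 0, bB 1, kK 2, mM 0])"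
proof -
  have "map_eq 2 (cl [dD 1, dD 0, bB 1, mM 2, kK 0]) (lcomp (cl [mM 2, kK 0]) (cl [dD 1, dD 0, bB 1]))"
    using cl_append[of "[dD 1, dD 0, bB 1]" "[mM 2, kK 0]"] by simp
  also have "map_eq 2 \<dots> (lcomp (ltens 2 K \<mu>) (Lam \<beta> \<Delta>))"
    by (rule map_eq_sym, rule lcomp_cong2[OF Lam_conv mk4 i4])
  also have "map_eq 2 \<dots> (lcomp (ltens 2 \<mu> K) (Lam \<beta> \<Delta>))" by (rule comm)
  also have "map_eq 2 \<dots> (lcomp (cl [kK 2, mM 0]) (cl [dD 1, dD 0, bB 1]))"
    by (rule lcomp_cong2[OF Lam_conv km4 i4])
  also have "lcomp (cl [kK 2, mM 0]) (cl [dD 1, dD 0, bB 1]) = cl ([dD 1, dD 0, bB 1] @ [kK 2, mM 0])"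
    by (rule cl_append[symmetric])
  finally show ?thesis by simp
qed

lemma ax_Du: "map_eq 0 (cl [uU 0, dD 0]) (cl [uU 0, uU 0])"
proof -
  have "map_eq 0 (cl [uU 0, dD 0]) (lcomp \<Delta> u)"
    by (simp only: cl.simps lcomp_lid_left) (rule lcomp_cong2[OF L0_eq L0_eq], simp)
  also have "map_eq 0 \<dots> (ltens 0 u u)" using A by blast
  also have "map_eq 0 \<dots> (cl [uU 0, uU 0])"
    by (simp only: cl.simps lcomp_lid_left) (rule lsplit, simp)
  finally show ?thesis .
qed

lemma b11: "betanm \<beta> 1 1 = L 0 2 \<beta>"
  by (simp add: One_nat_def ltens_lid_lid ltens_lid_right)

lemma b1_1: "beta1 \<beta> 1 = L 0 2 \<beta>" using b11 by simp

lemma g13: "map_eq 3 (ltens 1 lid (beta1 \<beta> 1)) (L 1 2 \<beta>)"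
proof -
  have "map_eq 3 (ltens 1 lid (L 0 2 \<beta>)) (L 1 2 (L 0 2 \<beta>))" by (rule ltl) simp
  also have "map_eq 3 \<dots> (L 1 2 \<beta>)" using L_L[of 0 2 2 1 3 \<beta>] by simp
  finally show ?thesis unfolding b1_1 .
qed

lemma b12: "map_eq 3 (betanm \<beta> 1 2) (cl [bB 0, bB 1])"
proof -
  have e: "betanm \<beta> 1 2 = lcomp (ltens 1 lid (beta1 \<beta> 1)) (ltens 2 \<beta> lid)"
    by (simp only: numeral_2_eq_2 One_nat_def beta1.simps betanm.simps)
  have "map_eq 3 (lcomp (ltens 1 lid (beta1 \<beta> 1)) (L 0 2 \<beta>)) (lcomp (L 1 2 \<beta>) (L 0 2 \<beta>))"
    by (rule lcomp_cong2[OF map_eq_refl g13 isL[OF isB, of 0 3 3]]) simp_all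
  then show ?thesis unfolding e ltens_lid_right by simp
qed

lemma b21: "map_eq 3 (betanm \<beta> 2 1) (cl [bB 1, bB 0])"
proof -
  have e: "betanm \<beta> 2 1 = lcomp (ltens 2 (betanm \<beta> 1 1) lid) (ltens 1 lid (beta1 \<beta> 1))"
    by (simp only: numeral_2_eq_2 One_nat_def beta1.simps betanm.simps) simp
  have gg: "map_eq 3 (ltens 2 (betanm \<beta> 1 1) lid) (L 0 2 \<beta>)"
    unfolding b11 ltens_lid_right using L_L[of 0 2 2 0 3 \<beta>] by simp
  have "map_eq 3 (lcomp (ltens 2 (betanm \<beta> 1 1) lid) (ltens 1 lid (beta1 \<beta> 1))) (lcomp (L 0 2 \<beta>) (L 1 2 \<beta>))"
    by (rule lcomp_cong2[OF g13 gg isL[OF isB, of 1 3 3]]) simp_all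
  then show ?thesis unfolding e by simp
qed

lemma ib01: "is_map 3 3 (cl [bB 0, bB 1])" using wf_is_map[of 3 "[bB 0, bB 1]"] by simp
lemma ib10: "is_map 3 3 (cl [bB 1, bB 0])" using wf_is_map[of 3 "[bB 1, bB 0]"] by simp

lemma e3: "Suc 2 = (3::nat)" by simp

lemma ax_mb: "map_eq 3 (cl [bB 0, bB 1, mM 0]) (cl [mM 1, bB 0])"
proof -
  have "beta_inv \<beta> 2 1 \<mu>" using hopf by (simp add: braided_hopf_def braided_bialgebra_def beta_compat_def)
  then have ax: "map_eq 3 (lcomp (ltens 2 \<mu> lid) (betanm \<beta> 1 2)) (lcomp (betanm \<beta> 1 1) (ltens 1 lid \<mu>))"
    unfolding beta_inv_def e3 .
  have "map_eq 3 (cl [bB 0, bB 1, mM 0]) (lcomp (cl [mM 0]) (cl [bB 0, bB 1]))" using cl_append[of "[bB 0, bB 1]" "[mM 0]"] by simp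
  also have "map_eq 3 \<dots> (lcomp (ltens 2 \<mu> lid) (betanm \<beta> 1 2))"
    by (rule lcomp_cong2L[OF map_eq_sym[OF b12] _ ib01]) (simp add: ltens_lid_right)
  also have "map_eq 3 \<dots> (lcomp (betanm \<beta> 1 1) (ltens 1 lid \<mu>))" by (rule ax)
  also have "map_eq 3 \<dots> (cl [mM 1, bB 0])"
    unfolding b11 by (simp only: cl.simps lcomp_lid_left) (rule lcomp_cong_left[OF ltl], simp)
  finally show ?thesis by simp
qed

lemma ax_mb': "map_eq 3 (cl [bB 1, bB 0, mM 1]) (cl [mM 0, bB 0])"
proof -
  have "beta_inv_inv \<beta> 2 1 \<mu>" using hopf by (simp add: braided_hopf_def braided_bialgebra_def beta_compat_def)
  then have ax: "map_eq 3 (lcomp (ltens 1 lid \<mu>) (betanm \<beta> 2 1)) (lcomp (betanm \<beta> 1 1) (ltens 2 \<mu> lid))"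
    unfolding beta_inv_inv_def e3 .
  have "map_eq 3 (cl [bB 1, bB 0, mM 1]) (lcomp (cl [mM 1]) (cl [bB 1, bB 0]))" using cl_append[of "[bB 1, bB 0]" "[mM 1]"] by simp
  also have "map_eq 3 \<dots> (lcomp (ltens 1 lid \<mu>) (betanm \<beta> 2 1))"
    by (rule lcomp_cong2L[OF map_eq_sym[OF b21] _ ib10]) (simp, rule map_eq_sym, rule ltl, simp)
  also have "map_eq 3 \<dots> (lcomp (betanm \<beta> 1 1) (ltens 2 \<mu> lid))" by (rule ax)
  also have "lcomp (betanm \<beta> 1 1) (ltens 2 \<mu> lid) = cl [mM 0, bB 0]"
    by (simp add: b11 ltens_lid_right)
  finally show ?thesis by simp
qed

lemma ax_Kb: "map_eq 3 (cl [bB 0, bB 1, kK 0]) (cl [kK 1])"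
proof -
  have ax: "map_eq 3 (lcomp (ltens 2 K lid) (betanm \<beta> 1 2)) (lcomp (betanm \<beta> 1 0) (ltens 1 lid K))"
    using K_inv unfolding beta_inv_def e3 .
  have "map_eq 3 (cl [bB 0, bB 1, kK 0]) (lcomp (cl [kK 0]) (cl [bB 0, bB 1]))" using cl_append[of "[bB 0, bB 1]" "[kK 0]"] by simp
  also have "map_eq 3 \<dots> (lcomp (ltens 2 K lid) (betanm \<beta> 1 2))"
    by (rule lcomp_cong2L[OF map_eq_sym[OF b12] _ ib01]) (simp add: ltens_lid_right)
  also have "map_eq 3 \<dots> (lcomp (betanm \<beta> 1 0) (ltens 1 lid K))" by (rule ax)
  also have "map_eq 3 \<dots> (cl [kK 1])"
    by (simp add: One_nat_def) (rule ltl, simp)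
  finally show ?thesis by simp
qed

lemma ax_ub1: "map_eq 1 (cl [uU 0]) (cl [uU 1, bB 0])"
proof -
  have "beta_inv \<beta> 0 1 u" using hopf by (simp add: braided_hopf_def braided_bialgebra_def beta_compat_def)
  then have ax: "map_eq 1 (lcomp (ltens 0 u lid) (betanm \<beta> 1 0)) (lcomp (betanm \<beta> 1 1) (ltens 1 lid u))"
    unfolding beta_inv_def One_nat_def .
  have "map_eq 1 (cl [uU 0]) (lcomp (ltens 0 u lid) (betanm \<beta> 1 0))"
    by (simp add: ltens_lid_right One_nat_def)
  also have "map_eq 1 \<dots> (lcomp (betanm \<beta> 1 1) (ltens 1 lid u))" by (rule ax)
  also have "map_eq 1 \<dots> (cl [uU 1, bB 0])"
    unfolding b11 by (simp only: cl.simps lcomp_lid_left) (rule lcomp_cong_left[OF ltl], simp)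
  finally show ?thesis .
qed

lemma ax_ub2: "map_eq 1 (cl [uU 1]) (cl [uU 0, bB 0])"
proof -
  have "beta_inv_inv \<beta> 0 1 u" using hopf by (simp add: braided_hopf_def braided_bialgebra_def beta_compat_def)
  then have ax: "map_eq 1 (lcomp (ltens 1 lid u) (betanm \<beta> 0 1)) (lcomp (betanm \<beta> 1 1) (ltens 0 u lid))"
    unfolding beta_inv_inv_def One_nat_def .
  have "map_eq 1 (cl [uU 1]) (lcomp (ltens 1 lid u) (betanm \<beta> 0 1))"
    by simp (rule map_eq_sym, rule ltl, simp)
  also have "map_eq 1 \<dots> (lcomp (betanm \<beta> 1 1) (ltens 0 u lid))" by (rule ax)
  also have "lcomp (betanm \<beta> 1 1) (ltens 0 u lid) = cl [uU 0, bB 0]"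
    by (simp add: b11 ltens_lid_right)
  finally show ?thesis .
qed

lemma Kt_conv: "map_eq 1 (lcomp K (lcomp (ltens 1 S lid) \<Delta>)) (cl [dD 0, sS 0, kK 0])"
proof -
  have "map_eq 1 (lcomp (lcomp K (L 0 1 S)) \<Delta>) (lcomp (lcomp (L 0 2 K) (L 0 1 S)) (L 0 1 \<Delta>))"
    by (rule lcomp_cong2[OF L0_eq' lcomp_cong2[OF map_eq_refl L0_eq' isL[OF isS, of 0 2 2]] isL[OF isD, of 0 1 2]]) simp_all
  then show ?thesis by (simp only: cl.simps lcomp_lid_left ltens_lid_right lcomp_assoc)
qed

end

context BH begin

lemma p1a: "map_eq 1 (cl [dD 0, dD 0, sS 0, sS 1, bB 0, dD 2, bB 1, mM 2, mM 0]) (cl [eE 0, uU 0, uU 0])"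
proof -
  have "map_eq 1 (cl [dD 0, dD 0, sS 0, sS 1, bB 0, dD 2, bB 1, mM 2, mM 0]) (cl [dD 0, dD 0, sS 0, sS 1, dD 2, bB 0, bB 1, mM 2, mM 0])"
    by (rule swapR[where pre="[dD 0, dD 0, sS 0, sS 1]" and post="[bB 1, mM 2, mM 0]" and i=0 and k=2 and k'=2 and f="\<beta>" and j=2 and l=1 and l'=2 and g="\<Delta>" and jx=2]) simp_all
  also have "map_eq 1 \<dots> (cl [dD 0, dD 0, sS 0, sS 1, dD 2, bB 0, bB 1, mM 0, mM 1])"
    by (rule swapL[where pre="[dD 0, dD 0, sS 0, sS 1, dD 2, bB 0, bB 1]" and post="[]" and i=2 and k=2 and k'=1 and f="\<mu>" and j=0 and l=2 and l'=1 and g="\<mu>" and ix=1]) simp_all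
  also have "map_eq 1 \<dots> (cl [dD 0, dD 0, sS 0, sS 1, dD 2, mM 1, bB 0, mM 1])"
    by (rule axR[OF ax_mb, where pre="[dD 0, dD 0, sS 0, sS 1, dD 2]" and post="[mM 1]" and i=0]) simp_all
  also have "map_eq 1 \<dots> (cl [dD 0, dD 1, sS 0, sS 1, dD 2, mM 1, bB 0, mM 1])"
    by (rule axR[OF ax_coassoc, where pre="[]" and post="[sS 0, sS 1, dD 2, mM 1, bB 0, mM 1]" and i=0]) simp_all
  also have "map_eq 1 \<dots> (cl [dD 0, dD 1, sS 0, dD 2, sS 1, mM 1, bB 0, mM 1])"
    by (rule swapR[where pre="[dD 0, dD 1, sS 0]" and post="[mM 1, bB 0, mM 1]" and i=1 and k=1 and k'=1 and f="S" and j=2 and l=1 and l'=2 and g="\<Delta>" and jx=2]) simp_all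
  also have "map_eq 1 \<dots> (cl [dD 0, dD 1, dD 2, sS 0, sS 1, mM 1, bB 0, mM 1])"
    by (rule swapR[where pre="[dD 0, dD 1]" and post="[sS 1, mM 1, bB 0, mM 1]" and i=0 and k=1 and k'=1 and f="S" and j=2 and l=1 and l'=2 and g="\<Delta>" and jx=2]) simp_all
  also have "map_eq 1 \<dots> (cl [dD 0, dD 1, dD 1, sS 0, sS 1, mM 1, bB 0, mM 1])"
    by (rule axL[OF ax_coassoc, where pre="[dD 0]" and post="[sS 0, sS 1, mM 1, bB 0, mM 1]" and i=1]) simp_all
  also have "map_eq 1 \<dots> (cl [dD 0, dD 1, sS 0, dD 1, sS 1, mM 1, bB 0, mM 1])"
    by (rule swapL[where pre="[dD 0, dD 1]" and post="[sS 1, mM 1, bB 0, mM 1]" and i=1 and k=1 and k'=2 and f="\<Delta>" and j=0 and l=1 and l'=1 and g="S" and ix=1]) simp_all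
  also have "map_eq 1 \<dots> (cl [dD 0, dD 1, sS 0, eE 1, uU 1, bB 0, mM 1])"
    by (rule axR[OF ax_antipodeL, where pre="[dD 0, dD 1, sS 0]" and post="[bB 0, mM 1]" and i=1]) simp_all
  also have "map_eq 1 \<dots> (cl [dD 0, dD 1, eE 1, sS 0, uU 1, bB 0, mM 1])"
    by (rule swapR[where pre="[dD 0, dD 1]" and post="[uU 1, bB 0, mM 1]" and i=0 and k=1 and k'=1 and f="S" and j=1 and l=1 and l'=0 and g="\<delta>" and jx=1]) simp_all
  also have "map_eq 1 \<dots> (cl [dD 0, sS 0, uU 1, bB 0, mM 1])"
    by (rule axR[OF ax_counitL, where pre="[dD 0]" and post="[sS 0, uU 1, bB 0, mM 1]" and i=1]) simp_all
  also have "map_eq 1 \<dots> (cl [dD 0, sS 0, uU 0, mM 1])"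
    by (rule axL[OF ax_ub1, where pre="[dD 0, sS 0]" and post="[mM 1]" and i=0]) simp_all
  also have "map_eq 1 \<dots> (cl [dD 0, sS 0, mM 0, uU 0])"
    by (rule swapR[where pre="[dD 0, sS 0]" and post="[]" and i=0 and k=0 and k'=1 and f="u" and j=1 and l=2 and l'=1 and g="\<mu>" and jx=0]) simp_all
  also have "map_eq 1 \<dots> (cl [eE 0, uU 0, uU 0])"
    by (rule axR[OF ax_antipodeL, where pre="[]" and post="[uU 0]" and i=0]) simp_all
  finally show ?thesis .
qed

lemma p1b: "map_eq 1 (cl [dD 0, dD 0, sS 2, dD 2, bB 1, mM 2, mM 0]) (cl [eE 0, uU 0, uU 0])"
proof -
  have "map_eq 1 (cl [dD 0, dD 0, sS 2, dD 2, bB 1, mM 2, mM 0]) (cl [dD 0, sS 1, dD 0, dD 2, bB 1, mM 2, mM 0])"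
    by (rule swapR[where pre="[dD 0]" and post="[dD 2, bB 1, mM 2, mM 0]" and i=0 and k=1 and k'=2 and f="\<Delta>" and j=2 and l=1 and l'=1 and g="S" and jx=1]) simp_all
  also have "map_eq 1 \<dots> (cl [dD 0, sS 1, dD 1, dD 0, bB 1, mM 2, mM 0])"
    by (rule swapR[where pre="[dD 0, sS 1]" and post="[bB 1, mM 2, mM 0]" and i=0 and k=1 and k'=2 and f="\<Delta>" and j=2 and l=1 and l'=2 and g="\<Delta>" and jx=1]) simp_all
  also have "map_eq 1 \<dots> (cl [dD 0, sS 1, mM 0, dD 0])"
    by (rule axL[OF ax_bialg, where pre="[dD 0, sS 1]" and post="[]" and i=0]) simp_all
  also have "map_eq 1 \<dots> (cl [eE 0, uU 0, dD 0])"
    by (rule axR[OF ax_antipodeR, where pre="[]" and post="[dD 0]" and i=0]) simp_all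
  also have "map_eq 1 \<dots> (cl [eE 0, uU 0, uU 0])"
    by (rule axR[OF ax_Du, where pre="[eE 0]" and post="[]" and i=0]) simp_all
  finally show ?thesis .
qed

lemma m2assoc: "map_eq 6 (cl [bB 1, mM 2, mM 0, bB 1, mM 2, mM 0]) (cl [bB 3, mM 4, mM 2, bB 1, mM 2, mM 0])"
proof -
  have "map_eq 6 (cl [bB 1, mM 2, mM 0, bB 1, mM 2, mM 0]) (cl [bB 1, mM 2, bB 2, mM 0, mM 2, mM 0])"
    by (rule swapR[where pre="[bB 1, mM 2]" and post="[mM 2, mM 0]" and i=0 and k=2 and k'=1 and f="\<mu>" and j=1 and l=2 and l'=2 and g="\<beta>" and jx=2]) simp_all
  also have "map_eq 6 \<dots> (cl [bB 1, bB 3, bB 2, mM 3, mM 0, mM 2, mM 0])"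
    by (rule axL[OF ax_mb', where pre="[bB 1]" and post="[mM 0, mM 2, mM 0]" and i=2]) simp_all
  also have "map_eq 6 \<dots> (cl [bB 1, bB 3, bB 2, mM 0, mM 2, mM 2, mM 0])"
    by (rule swapL[where pre="[bB 1, bB 3, bB 2]" and post="[mM 2, mM 0]" and i=3 and k=2 and k'=1 and f="\<mu>" and j=0 and l=2 and l'=1 and g="\<mu>" and ix=2]) simp_all
  also have "map_eq 6 \<dots> (cl [bB 1, bB 3, bB 2, mM 0, mM 3, mM 2, mM 0])"
    by (rule axR[OF ax_assoc, where pre="[bB 1, bB 3, bB 2, mM 0]" and post="[mM 0]" and i=2]) simp_all
  also have "map_eq 6 \<dots> (cl [bB 1, bB 3, bB 2, mM 0, mM 3, mM 0, mM 1])"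
    by (rule swapL[where pre="[bB 1, bB 3, bB 2, mM 0, mM 3]" and post="[]" and i=2 and k=2 and k'=1 and f="\<mu>" and j=0 and l=2 and l'=1 and g="\<mu>" and ix=1]) simp_all
  also have "map_eq 6 \<dots> (cl [bB 1, bB 3, bB 2, mM 0, mM 0, mM 2, mM 1])"
    by (rule swapL[where pre="[bB 1, bB 3, bB 2, mM 0]" and post="[mM 1]" and i=3 and k=2 and k'=1 and f="\<mu>" and j=0 and l=2 and l'=1 and g="\<mu>" and ix=2]) simp_all
  also have "map_eq 6 \<dots> (cl [bB 1, bB 3, bB 2, mM 1, mM 0, mM 2, mM 1])"
    by (rule axR[OF ax_assoc, where pre="[bB 1, bB 3, bB 2]" and post="[mM 2, mM 1]" and i=0]) simp_all
  also have "map_eq 6 \<dots> (cl [bB 1, bB 3, bB 2, mM 1, mM 3, mM 0, mM 1])"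
    by (rule swapR[where pre="[bB 1, bB 3, bB 2, mM 1]" and post="[mM 1]" and i=0 and k=2 and k'=1 and f="\<mu>" and j=2 and l=2 and l'=1 and g="\<mu>" and jx=3]) simp_all
  also have "map_eq 6 \<dots> (cl [bB 1, bB 3, bB 2, mM 4, mM 1, mM 0, mM 1])"
    by (rule swapR[where pre="[bB 1, bB 3, bB 2]" and post="[mM 0, mM 1]" and i=1 and k=2 and k'=1 and f="\<mu>" and j=3 and l=2 and l'=1 and g="\<mu>" and jx=4]) simp_all
  also have "map_eq 6 \<dots> (cl [bB 1, bB 3, bB 2, mM 4, mM 1, mM 2, mM 0])"
    by (rule swapR[where pre="[bB 1, bB 3, bB 2, mM 4, mM 1]" and post="[]" and i=0 and k=2 and k'=1 and f="\<mu>" and j=1 and l=2 and l'=1 and g="\<mu>" and jx=2]) simp_all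
  also have "map_eq 6 \<dots> (cl [bB 3, bB 1, bB 2, mM 4, mM 1, mM 2, mM 0])"
    by (rule swapR[where pre="[]" and post="[bB 2, mM 4, mM 1, mM 2, mM 0]" and i=1 and k=2 and k'=2 and f="\<beta>" and j=3 and l=2 and l'=2 and g="\<beta>" and jx=3]) simp_all
  also have "map_eq 6 \<dots> (cl [bB 3, bB 1, mM 4, bB 2, mM 1, mM 2, mM 0])"
    by (rule swapR[where pre="[bB 3, bB 1]" and post="[mM 1, mM 2, mM 0]" and i=2 and k=2 and k'=2 and f="\<beta>" and j=4 and l=2 and l'=1 and g="\<mu>" and jx=4]) simp_all
  also have "map_eq 6 \<dots> (cl [bB 3, mM 4, bB 1, bB 2, mM 1, mM 2, mM 0])"
    by (rule swapR[where pre="[bB 3]" and post="[bB 2, mM 1, mM 2, mM 0]" and i=1 and k=2 and k'=2 and f="\<beta>" and j=4 and l=2 and l'=1 and g="\<mu>" and jx=4]) simp_all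
  also have "map_eq 6 \<dots> (cl [bB 3, mM 4, mM 2, bB 1, mM 2, mM 0])"
    by (rule axR[OF ax_mb, where pre="[bB 3, mM 4]" and post="[mM 2, mM 0]" and i=1]) simp_all
  finally show ?thesis .
qed

lemma m2unitL: "map_eq 2 (cl [uU 0, uU 0, bB 1, mM 2, mM 0]) (cl [])"
proof -
  have "map_eq 2 (cl [uU 0, uU 0, bB 1, mM 2, mM 0]) (cl [uU 0, uU 1, bB 1, mM 2, mM 0])"
    by (rule swapL[where pre="[]" and post="[bB 1, mM 2, mM 0]" and i=0 and k=0 and k'=1 and f="u" and j=0 and l=0 and l'=1 and g="u" and ix=1]) simp_all
  also have "map_eq 2 \<dots> (cl [uU 0, uU 2, mM 2, mM 0])"
    by (rule axL[OF ax_ub2, where pre="[uU 0]" and post="[mM 2, mM 0]" and i=1]) simp_all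
  also have "map_eq 2 \<dots> (cl [uU 0, mM 0])"
    by (rule axR[OF ax_unitL, where pre="[uU 0]" and post="[mM 0]" and i=2]) simp_all
  also have "map_eq 2 \<dots> (cl [])"
    by (rule axR[OF ax_unitL, where pre="[]" and post="[]" and i=0]) simp_all
  finally show ?thesis .
qed

lemma m2unitR: "map_eq 2 (cl [uU 2, uU 2, bB 1, mM 2, mM 0]) (cl [])"
proof -
  have "map_eq 2 (cl [uU 2, uU 2, bB 1, mM 2, mM 0]) (cl [uU 2, uU 3, bB 1, mM 2, mM 0])"
    by (rule swapL[where pre="[]" and post="[bB 1, mM 2, mM 0]" and i=2 and k=0 and k'=1 and f="u" and j=2 and l=0 and l'=1 and g="u" and ix=3]) simp_all
  also have "map_eq 2 \<dots> (cl [uU 2, bB 1, uU 3, mM 2, mM 0])"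
    by (rule swapL[where pre="[uU 2]" and post="[mM 2, mM 0]" and i=3 and k=0 and k'=1 and f="u" and j=1 and l=2 and l'=2 and g="\<beta>" and ix=3]) simp_all
  also have "map_eq 2 \<dots> (cl [uU 1, uU 3, mM 2, mM 0])"
    by (rule axL[OF ax_ub1, where pre="[]" and post="[uU 3, mM 2, mM 0]" and i=1]) simp_all
  also have "map_eq 2 \<dots> (cl [uU 1, mM 0])"
    by (rule axR[OF ax_unitR, where pre="[uU 1]" and post="[mM 0]" and i=2]) simp_all
  also have "map_eq 2 \<dots> (cl [])"
    by (rule axR[OF ax_unitR, where pre="[]" and post="[]" and i=0]) simp_all
  finally show ?thesis .
qed

lemma p1c: "map_eq 1 (cl [sS 0, dD 0]) (cl [dD 0, sS 0, sS 1, bB 0])"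
proof -
  have "map_eq 1 (cl [sS 0, dD 0]) (cl [sS 0, dD 0, uU 0, uU 0, bB 1, mM 2, mM 0])"
    by (rule axL[OF m2unitL, where pre="[sS 0, dD 0]" and post="[]" and i=0]) simp_all
  also have "map_eq 1 \<dots> (cl [dD 0, eE 0, sS 0, dD 0, uU 0, uU 0, bB 1, mM 2, mM 0])"
    by (rule axL[OF ax_counitL, where pre="[]" and post="[sS 0, dD 0, uU 0, uU 0, bB 1, mM 2, mM 0]" and i=0]) simp_all
  also have "map_eq 1 \<dots> (cl [dD 0, eE 0, sS 0, uU 0, dD 1, uU 0, bB 1, mM 2, mM 0])"
    by (rule swapL[where pre="[dD 0, eE 0, sS 0]" and post="[uU 0, bB 1, mM 2, mM 0]" and i=0 and k=1 and k'=2 and f="\<Delta>" and j=0 and l=0 and l'=1 and g="u" and ix=1]) simp_all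
  also have "map_eq 1 \<dots> (cl [dD 0, eE 0, uU 0, sS 1, dD 1, uU 0, bB 1, mM 2, mM 0])"
    by (rule swapL[where pre="[dD 0, eE 0]" and post="[dD 1, uU 0, bB 1, mM 2, mM 0]" and i=0 and k=1 and k'=1 and f="S" and j=0 and l=0 and l'=1 and g="u" and ix=1]) simp_all
  also have "map_eq 1 \<dots> (cl [dD 0, eE 0, uU 0, sS 1, uU 0, dD 2, bB 1, mM 2, mM 0])"
    by (rule swapL[where pre="[dD 0, eE 0, uU 0, sS 1]" and post="[bB 1, mM 2, mM 0]" and i=1 and k=1 and k'=2 and f="\<Delta>" and j=0 and l=0 and l'=1 and g="u" and ix=2]) simp_all
  also have "map_eq 1 \<dots> (cl [dD 0, eE 0, uU 0, uU 0, sS 2, dD 2, bB 1, mM 2, mM 0])"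
    by (rule swapL[where pre="[dD 0, eE 0, uU 0]" and post="[dD 2, bB 1, mM 2, mM 0]" and i=1 and k=1 and k'=1 and f="S" and j=0 and l=0 and l'=1 and g="u" and ix=2]) simp_all
  also have "map_eq 1 \<dots> (cl [dD 0, dD 0, dD 0, sS 0, sS 1, bB 0, dD 2, bB 1, mM 2, mM 0, sS 2, dD 2, bB 1, mM 2, mM 0])"
    by (rule axL[OF p1a, where pre="[dD 0]" and post="[sS 2, dD 2, bB 1, mM 2, mM 0]" and i=0]) simp_all
  also have "map_eq 1 \<dots> (cl [dD 0, dD 1, dD 0, sS 0, sS 1, bB 0, dD 2, bB 1, mM 2, mM 0, sS 2, dD 2, bB 1, mM 2, mM 0])"
    by (rule axR[OF ax_coassoc, where pre="[]" and post="[dD 0, sS 0, sS 1, bB 0, dD 2, bB 1, mM 2, mM 0, sS 2, dD 2, bB 1, mM 2, mM 0]" and i=0]) simp_all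
  also have "map_eq 1 \<dots> (cl [dD 0, dD 1, dD 0, sS 0, sS 1, bB 0, dD 2, bB 1, mM 2, sS 3, mM 0, dD 2, bB 1, mM 2, mM 0])"
    by (rule swapR[where pre="[dD 0, dD 1, dD 0, sS 0, sS 1, bB 0, dD 2, bB 1, mM 2]" and post="[dD 2, bB 1, mM 2, mM 0]" and i=0 and k=2 and k'=1 and f="\<mu>" and j=2 and l=1 and l'=1 and g="S" and jx=3]) simp_all
  also have "map_eq 1 \<dots> (cl [dD 0, dD 1, dD 0, sS 0, sS 1, bB 0, dD 2, bB 1, sS 4, mM 2, mM 0, dD 2, bB 1, mM 2, mM 0])"
    by (rule swapR[where pre="[dD 0, dD 1, dD 0, sS 0, sS 1, bB 0, dD 2, bB 1]" and post="[mM 0, dD 2, bB 1, mM 2, mM 0]" and i=2 and k=2 and k'=1 and f="\<mu>" and j=3 and l=1 and l'=1 and g="S" and jx=4]) simp_all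
  also have "map_eq 1 \<dots> (cl [dD 0, dD 1, dD 0, sS 0, sS 1, bB 0, dD 2, sS 4, bB 1, mM 2, mM 0, dD 2, bB 1, mM 2, mM 0])"
    by (rule swapR[where pre="[dD 0, dD 1, dD 0, sS 0, sS 1, bB 0, dD 2]" and post="[mM 2, mM 0, dD 2, bB 1, mM 2, mM 0]" and i=1 and k=2 and k'=2 and f="\<beta>" and j=4 and l=1 and l'=1 and g="S" and jx=4]) simp_all
  also have "map_eq 1 \<dots> (cl [dD 0, dD 1, dD 0, sS 0, sS 1, bB 0, dD 2, sS 4, bB 1, mM 2, dD 3, mM 0, bB 1, mM 2, mM 0])"
    by (rule swapR[where pre="[dD 0, dD 1, dD 0, sS 0, sS 1, bB 0, dD 2, sS 4, bB 1, mM 2]" and post="[bB 1, mM 2, mM 0]" and i=0 and k=2 and k'=1 and f="\<mu>" and j=2 and l=1 and l'=2 and g="\<Delta>" and jx=3]) simp_all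
  also have "map_eq 1 \<dots> (cl [dD 0, dD 1, dD 0, sS 0, sS 1, bB 0, dD 2, sS 4, bB 1, dD 4, mM 2, mM 0, bB 1, mM 2, mM 0])"
    by (rule swapR[where pre="[dD 0, dD 1, dD 0, sS 0, sS 1, bB 0, dD 2, sS 4, bB 1]" and post="[mM 0, bB 1, mM 2, mM 0]" and i=2 and k=2 and k'=1 and f="\<mu>" and j=3 and l=1 and l'=2 and g="\<Delta>" and jx=4]) simp_all
  also have "map_eq 1 \<dots> (cl [dD 0, dD 1, dD 0, sS 0, sS 1, bB 0, dD 2, sS 4, dD 4, bB 1, mM 2, mM 0, bB 1, mM 2, mM 0])"
    by (rule swapR[where pre="[dD 0, dD 1, dD 0, sS 0, sS 1, bB 0, dD 2, sS 4]" and post="[mM 2, mM 0, bB 1, mM 2, mM 0]" and i=1 and k=2 and k'=2 and f="\<beta>" and j=4 and l=1 and l'=2 and g="\<Delta>" and jx=4]) simp_all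
  also have "map_eq 1 \<dots> (cl [dD 0, dD 1, dD 0, sS 0, sS 1, bB 0, dD 2, sS 4, dD 4, bB 3, mM 4, mM 2, bB 1, mM 2, mM 0])"
    by (rule axR[OF m2assoc, where pre="[dD 0, dD 1, dD 0, sS 0, sS 1, bB 0, dD 2, sS 4, dD 4]" and post="[]" and i=0]) simp_all
  also have "map_eq 1 \<dots> (cl [dD 0, dD 0, dD 2, sS 0, sS 1, bB 0, dD 2, sS 4, dD 4, bB 3, mM 4, mM 2, bB 1, mM 2, mM 0])"
    by (rule swapL[where pre="[dD 0]" and post="[sS 0, sS 1, bB 0, dD 2, sS 4, dD 4, bB 3, mM 4, mM 2, bB 1, mM 2, mM 0]" and i=1 and k=1 and k'=2 and f="\<Delta>" and j=0 and l=1 and l'=2 and g="\<Delta>" and ix=2]) simp_all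
  also have "map_eq 1 \<dots> (cl [dD 0, dD 0, sS 0, dD 2, sS 1, bB 0, dD 2, sS 4, dD 4, bB 3, mM 4, mM 2, bB 1, mM 2, mM 0])"
    by (rule swapL[where pre="[dD 0, dD 0]" and post="[sS 1, bB 0, dD 2, sS 4, dD 4, bB 3, mM 4, mM 2, bB 1, mM 2, mM 0]" and i=2 and k=1 and k'=2 and f="\<Delta>" and j=0 and l=1 and l'=1 and g="S" and ix=2]) simp_all
  also have "map_eq 1 \<dots> (cl [dD 0, dD 0, sS 0, sS 1, dD 2, bB 0, dD 2, sS 4, dD 4, bB 3, mM 4, mM 2, bB 1, mM 2, mM 0])"
    by (rule swapL[where pre="[dD 0, dD 0, sS 0]" and post="[bB 0, dD 2, sS 4, dD 4, bB 3, mM 4, mM 2, bB 1, mM 2, mM 0]" and i=2 and k=1 and k'=2 and f="\<Delta>" and j=1 and l=1 and l'=1 and g="S" and ix=2]) simp_all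
  also have "map_eq 1 \<dots> (cl [dD 0, dD 0, sS 0, sS 1, bB 0, dD 2, dD 2, sS 4, dD 4, bB 3, mM 4, mM 2, bB 1, mM 2, mM 0])"
    by (rule swapL[where pre="[dD 0, dD 0, sS 0, sS 1]" and post="[dD 2, sS 4, dD 4, bB 3, mM 4, mM 2, bB 1, mM 2, mM 0]" and i=2 and k=1 and k'=2 and f="\<Delta>" and j=0 and l=2 and l'=2 and g="\<beta>" and ix=2]) simp_all
  also have "map_eq 1 \<dots> (cl [dD 0, dD 0, sS 0, sS 1, bB 0, eE 2, uU 2, uU 2, bB 1, mM 2, mM 0])"
    by (rule axR[OF p1b, where pre="[dD 0, dD 0, sS 0, sS 1, bB 0]" and post="[bB 1, mM 2, mM 0]" and i=2]) simp_all
  also have "map_eq 1 \<dots> (cl [dD 0, dD 0, sS 0, sS 1, bB 0, eE 2])"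
    by (rule axR[OF m2unitR, where pre="[dD 0, dD 0, sS 0, sS 1, bB 0, eE 2]" and post="[]" and i=0]) simp_all
  also have "map_eq 1 \<dots> (cl [dD 0, dD 0, sS 0, sS 1, eE 2, bB 0])"
    by (rule swapR[where pre="[dD 0, dD 0, sS 0, sS 1]" and post="[]" and i=0 and k=2 and k'=2 and f="\<beta>" and j=2 and l=1 and l'=0 and g="\<delta>" and jx=2]) simp_all
  also have "map_eq 1 \<dots> (cl [dD 0, dD 0, sS 0, eE 2, sS 1, bB 0])"
    by (rule swapR[where pre="[dD 0, dD 0, sS 0]" and post="[bB 0]" and i=1 and k=1 and k'=1 and f="S" and j=2 and l=1 and l'=0 and g="\<delta>" and jx=2]) simp_all
  also have "map_eq 1 \<dots> (cl [dD 0, dD 0, eE 2, sS 0, sS 1, bB 0])"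
    by (rule swapR[where pre="[dD 0, dD 0]" and post="[sS 1, bB 0]" and i=0 and k=1 and k'=1 and f="S" and j=2 and l=1 and l'=0 and g="\<delta>" and jx=2]) simp_all
  also have "map_eq 1 \<dots> (cl [dD 0, eE 1, dD 0, sS 0, sS 1, bB 0])"
    by (rule swapR[where pre="[dD 0]" and post="[sS 0, sS 1, bB 0]" and i=0 and k=1 and k'=2 and f="\<Delta>" and j=2 and l=1 and l'=0 and g="\<delta>" and jx=1]) simp_all
  also have "map_eq 1 \<dots> (cl [dD 0, sS 0, sS 1, bB 0])"
    by (rule axR[OF ax_counitR, where pre="[]" and post="[dD 0, sS 0, sS 1, bB 0]" and i=0]) simp_all
  finally show ?thesis .
qed

lemma p2a: "map_eq 1 (cl [dD 0, sS 0, dD 1, dD 1, sS 1, kK 1, mM 0]) (cl [dD 0, sS 0, kK 0, uU 0])"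
proof -
  have "map_eq 1 (cl [dD 0, sS 0, dD 1, dD 1, sS 1, kK 1, mM 0]) (cl [dD 0, dD 1, sS 0, dD 1, sS 1, kK 1, mM 0])"
    by (rule swapR[where pre="[dD 0]" and post="[dD 1, sS 1, kK 1, mM 0]" and i=0 and k=1 and k'=1 and f="S" and j=1 and l=1 and l'=2 and g="\<Delta>" and jx=1]) simp_all
  also have "map_eq 1 \<dots> (cl [dD 0, dD 1, dD 1, sS 0, sS 1, kK 1, mM 0])"
    by (rule swapR[where pre="[dD 0, dD 1]" and post="[sS 1, kK 1, mM 0]" and i=0 and k=1 and k'=1 and f="S" and j=1 and l=1 and l'=2 and g="\<Delta>" and jx=1]) simp_all
  also have "map_eq 1 \<dots> (cl [dD 0, dD 1, dD 2, sS 0, sS 1, kK 1, mM 0])"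
    by (rule axR[OF ax_coassoc, where pre="[dD 0]" and post="[sS 0, sS 1, kK 1, mM 0]" and i=1]) simp_all
  also have "map_eq 1 \<dots> (cl [dD 0, dD 0, dD 2, sS 0, sS 1, kK 1, mM 0])"
    by (rule axL[OF ax_coassoc, where pre="[]" and post="[dD 2, sS 0, sS 1, kK 1, mM 0]" and i=0]) simp_all
  also have "map_eq 1 \<dots> (cl [dD 0, dD 0, dD 2, sS 0, sS 1, bB 0, bB 1, kK 0, mM 0])"
    by (rule axL[OF ax_Kb, where pre="[dD 0, dD 0, dD 2, sS 0, sS 1]" and post="[mM 0]" and i=0]) simp_all
  also have "map_eq 1 \<dots> (cl [dD 0, dD 0, sS 0, dD 2, sS 1, bB 0, bB 1, kK 0, mM 0])"
    by (rule swapL[where pre="[dD 0, dD 0]" and post="[sS 1, bB 0, bB 1, kK 0, mM 0]" and i=2 and k=1 and k'=2 and f="\<Delta>" and j=0 and l=1 and l'=1 and g="S" and ix=2]) simp_all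
  also have "map_eq 1 \<dots> (cl [dD 0, dD 0, sS 0, sS 1, dD 2, bB 0, bB 1, kK 0, mM 0])"
    by (rule swapL[where pre="[dD 0, dD 0, sS 0]" and post="[bB 0, bB 1, kK 0, mM 0]" and i=2 and k=1 and k'=2 and f="\<Delta>" and j=1 and l=1 and l'=1 and g="S" and ix=2]) simp_all
  also have "map_eq 1 \<dots> (cl [dD 0, dD 0, sS 0, sS 1, bB 0, dD 2, bB 1, kK 0, mM 0])"
    by (rule swapL[where pre="[dD 0, dD 0, sS 0, sS 1]" and post="[bB 1, kK 0, mM 0]" and i=2 and k=1 and k'=2 and f="\<Delta>" and j=0 and l=2 and l'=2 and g="\<beta>" and ix=2]) simp_all
  also have "map_eq 1 \<dots> (cl [dD 0, dD 0, sS 0, sS 1, bB 0, dD 2, bB 1, mM 2, kK 0])"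
    by (rule swapR[where pre="[dD 0, dD 0, sS 0, sS 1, bB 0, dD 2, bB 1]" and post="[]" and i=0 and k=2 and k'=0 and f="K" and j=0 and l=2 and l'=1 and g="\<mu>" and jx=2]) simp_all
  also have "map_eq 1 \<dots> (cl [dD 0, sS 0, dD 0, dD 2, bB 1, mM 2, kK 0])"
    by (rule axL[OF p1c, where pre="[dD 0]" and post="[dD 2, bB 1, mM 2, kK 0]" and i=0]) simp_all
  also have "map_eq 1 \<dots> (cl [dD 0, sS 0, dD 1, dD 0, bB 1, mM 2, kK 0])"
    by (rule swapR[where pre="[dD 0, sS 0]" and post="[bB 1, mM 2, kK 0]" and i=0 and k=1 and k'=2 and f="\<Delta>" and j=2 and l=1 and l'=2 and g="\<Delta>" and jx=1]) simp_all
  also have "map_eq 1 \<dots> (cl [dD 0, sS 0, dD 1, dD 0, bB 1, kK 2, mM 0])"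
    by (rule axR[OF ax_comm, where pre="[dD 0, sS 0]" and post="[]" and i=0]) simp_all
  also have "map_eq 1 \<dots> (cl [dD 0, sS 0, dD 0, dD 2, bB 1, kK 2, mM 0])"
    by (rule swapL[where pre="[dD 0, sS 0]" and post="[bB 1, kK 2, mM 0]" and i=1 and k=1 and k'=2 and f="\<Delta>" and j=0 and l=1 and l'=2 and g="\<Delta>" and ix=2]) simp_all
  also have "map_eq 1 \<dots> (cl [dD 0, dD 0, sS 0, sS 1, bB 0, dD 2, bB 1, kK 2, mM 0])"
    by (rule axR[OF p1c, where pre="[dD 0]" and post="[dD 2, bB 1, kK 2, mM 0]" and i=0]) simp_all
  also have "map_eq 1 \<dots> (cl [dD 0, dD 0, sS 0, sS 1, dD 2, bB 0, bB 1, kK 2, mM 0])"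
    by (rule swapR[where pre="[dD 0, dD 0, sS 0, sS 1]" and post="[bB 1, kK 2, mM 0]" and i=0 and k=2 and k'=2 and f="\<beta>" and j=2 and l=1 and l'=2 and g="\<Delta>" and jx=2]) simp_all
  also have "map_eq 1 \<dots> (cl [dD 0, dD 0, sS 0, sS 1, dD 2, bB 0, bB 1, mM 0, kK 1])"
    by (rule swapL[where pre="[dD 0, dD 0, sS 0, sS 1, dD 2, bB 0, bB 1]" and post="[]" and i=2 and k=2 and k'=0 and f="K" and j=0 and l=2 and l'=1 and g="\<mu>" and ix=1]) simp_all
  also have "map_eq 1 \<dots> (cl [dD 0, dD 0, sS 0, sS 1, dD 2, mM 1, bB 0, kK 1])"
    by (rule axR[OF ax_mb, where pre="[dD 0, dD 0, sS 0, sS 1, dD 2]" and post="[kK 1]" and i=0]) simp_all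
  also have "map_eq 1 \<dots> (cl [dD 0, dD 1, sS 0, sS 1, dD 2, mM 1, bB 0, kK 1])"
    by (rule axR[OF ax_coassoc, where pre="[]" and post="[sS 0, sS 1, dD 2, mM 1, bB 0, kK 1]" and i=0]) simp_all
  also have "map_eq 1 \<dots> (cl [dD 0, dD 1, sS 0, dD 2, sS 1, mM 1, bB 0, kK 1])"
    by (rule swapR[where pre="[dD 0, dD 1, sS 0]" and post="[mM 1, bB 0, kK 1]" and i=1 and k=1 and k'=1 and f="S" and j=2 and l=1 and l'=2 and g="\<Delta>" and jx=2]) simp_all
  also have "map_eq 1 \<dots> (cl [dD 0, dD 1, dD 2, sS 0, sS 1, mM 1, bB 0, kK 1])"
    by (rule swapR[where pre="[dD 0, dD 1]" and post="[sS 1, mM 1, bB 0, kK 1]" and i=0 and k=1 and k'=1 and f="S" and j=2 and l=1 and l'=2 and g="\<Delta>" and jx=2]) simp_all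
  also have "map_eq 1 \<dots> (cl [dD 0, dD 1, dD 1, sS 0, sS 1, mM 1, bB 0, kK 1])"
    by (rule axL[OF ax_coassoc, where pre="[dD 0]" and post="[sS 0, sS 1, mM 1, bB 0, kK 1]" and i=1]) simp_all
  also have "map_eq 1 \<dots> (cl [dD 0, dD 1, sS 0, dD 1, sS 1, mM 1, bB 0, kK 1])"
    by (rule swapL[where pre="[dD 0, dD 1]" and post="[sS 1, mM 1, bB 0, kK 1]" and i=1 and k=1 and k'=2 and f="\<Delta>" and j=0 and l=1 and l'=1 and g="S" and ix=1]) simp_all
  also have "map_eq 1 \<dots> (cl [dD 0, dD 1, sS 0, eE 1, uU 1, bB 0, kK 1])"
    by (rule axR[OF ax_antipodeL, where pre="[dD 0, dD 1, sS 0]" and post="[bB 0, kK 1]" and i=1]) simp_all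
  also have "map_eq 1 \<dots> (cl [dD 0, dD 1, eE 1, sS 0, uU 1, bB 0, kK 1])"
    by (rule swapR[where pre="[dD 0, dD 1]" and post="[uU 1, bB 0, kK 1]" and i=0 and k=1 and k'=1 and f="S" and j=1 and l=1 and l'=0 and g="\<delta>" and jx=1]) simp_all
  also have "map_eq 1 \<dots> (cl [dD 0, sS 0, uU 1, bB 0, kK 1])"
    by (rule axR[OF ax_counitL, where pre="[dD 0]" and post="[sS 0, uU 1, bB 0, kK 1]" and i=1]) simp_all
  also have "map_eq 1 \<dots> (cl [dD 0, sS 0, uU 0, kK 1])"
    by (rule axL[OF ax_ub1, where pre="[dD 0, sS 0]" and post="[kK 1]" and i=0]) simp_all
  also have "map_eq 1 \<dots> (cl [dD 0, sS 0, kK 0, uU 0])"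
    by (rule swapR[where pre="[dD 0, sS 0]" and post="[]" and i=0 and k=0 and k'=1 and f="u" and j=1 and l=2 and l'=0 and g="K" and jx=0]) simp_all
  finally show ?thesis .
qed

lemma p2b: "map_eq 1 (cl [dD 0, dD 0, sS 0, kK 0]) (cl [dD 0, dD 1, sS 1, kK 1])"
proof -
  have "map_eq 1 (cl [dD 0, dD 0, sS 0, kK 0]) (cl [dD 0, dD 0, sS 0, kK 0, uU 0, mM 0])"
    by (rule axL[OF ax_unitL, where pre="[dD 0, dD 0, sS 0, kK 0]" and post="[]" and i=0]) simp_all
  also have "map_eq 1 \<dots> (cl [dD 0, eE 0, dD 0, dD 0, sS 0, kK 0, uU 0, mM 0])"
    by (rule axL[OF ax_counitL, where pre="[]" and post="[dD 0, dD 0, sS 0, kK 0, uU 0, mM 0]" and i=0]) simp_all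
  also have "map_eq 1 \<dots> (cl [dD 0, eE 0, dD 0, dD 0, sS 0, uU 0, kK 1, mM 0])"
    by (rule swapL[where pre="[dD 0, eE 0, dD 0, dD 0, sS 0]" and post="[mM 0]" and i=0 and k=2 and k'=0 and f="K" and j=0 and l=0 and l'=1 and g="u" and ix=1]) simp_all
  also have "map_eq 1 \<dots> (cl [dD 0, eE 0, dD 0, dD 0, uU 0, sS 1, kK 1, mM 0])"
    by (rule swapL[where pre="[dD 0, eE 0, dD 0, dD 0]" and post="[kK 1, mM 0]" and i=0 and k=1 and k'=1 and f="S" and j=0 and l=0 and l'=1 and g="u" and ix=1]) simp_all
  also have "map_eq 1 \<dots> (cl [dD 0, eE 0, dD 0, uU 0, dD 1, sS 1, kK 1, mM 0])"
    by (rule swapL[where pre="[dD 0, eE 0, dD 0]" and post="[sS 1, kK 1, mM 0]" and i=0 and k=1 and k'=2 and f="\<Delta>" and j=0 and l=0 and l'=1 and g="u" and ix=1]) simp_all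
  also have "map_eq 1 \<dots> (cl [dD 0, eE 0, uU 0, dD 1, dD 1, sS 1, kK 1, mM 0])"
    by (rule swapL[where pre="[dD 0, eE 0]" and post="[dD 1, sS 1, kK 1, mM 0]" and i=0 and k=1 and k'=2 and f="\<Delta>" and j=0 and l=0 and l'=1 and g="u" and ix=1]) simp_all
  also have "map_eq 1 \<dots> (cl [dD 0, dD 0, sS 1, mM 0, dD 1, dD 1, sS 1, kK 1, mM 0])"
    by (rule axL[OF ax_antipodeR, where pre="[dD 0]" and post="[dD 1, dD 1, sS 1, kK 1, mM 0]" and i=0]) simp_all
  also have "map_eq 1 \<dots> (cl [dD 0, dD 0, sS 1, dD 2, mM 0, dD 1, sS 1, kK 1, mM 0])"
    by (rule swapR[where pre="[dD 0, dD 0, sS 1]" and post="[dD 1, sS 1, kK 1, mM 0]" and i=0 and k=2 and k'=1 and f="\<mu>" and j=1 and l=1 and l'=2 and g="\<Delta>" and jx=2]) simp_all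
  also have "map_eq 1 \<dots> (cl [dD 0, dD 0, sS 1, dD 2, dD 2, mM 0, sS 1, kK 1, mM 0])"
    by (rule swapR[where pre="[dD 0, dD 0, sS 1, dD 2]" and post="[sS 1, kK 1, mM 0]" and i=0 and k=2 and k'=1 and f="\<mu>" and j=1 and l=1 and l'=2 and g="\<Delta>" and jx=2]) simp_all
  also have "map_eq 1 \<dots> (cl [dD 0, dD 0, sS 1, dD 2, dD 2, sS 2, mM 0, kK 1, mM 0])"
    by (rule swapR[where pre="[dD 0, dD 0, sS 1, dD 2, dD 2]" and post="[kK 1, mM 0]" and i=0 and k=2 and k'=1 and f="\<mu>" and j=1 and l=1 and l'=1 and g="S" and jx=2]) simp_all
  also have "map_eq 1 \<dots> (cl [dD 0, dD 0, sS 1, dD 2, dD 2, sS 2, kK 2, mM 0, mM 0])"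
    by (rule swapR[where pre="[dD 0, dD 0, sS 1, dD 2, dD 2, sS 2]" and post="[mM 0]" and i=0 and k=2 and k'=1 and f="\<mu>" and j=1 and l=2 and l'=0 and g="K" and jx=2]) simp_all
  also have "map_eq 1 \<dots> (cl [dD 0, dD 0, sS 1, dD 2, dD 2, sS 2, kK 2, mM 1, mM 0])"
    by (rule axR[OF ax_assoc, where pre="[dD 0, dD 0, sS 1, dD 2, dD 2, sS 2, kK 2]" and post="[]" and i=0]) simp_all
  also have "map_eq 1 \<dots> (cl [dD 0, dD 1, sS 1, dD 2, dD 2, sS 2, kK 2, mM 1, mM 0])"
    by (rule axR[OF ax_coassoc, where pre="[]" and post="[sS 1, dD 2, dD 2, sS 2, kK 2, mM 1, mM 0]" and i=0]) simp_all
  also have "map_eq 1 \<dots> (cl [dD 0, dD 1, sS 1, kK 1, uU 1, mM 0])"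
    by (rule axR[OF p2a, where pre="[dD 0]" and post="[mM 0]" and i=1]) simp_all
  also have "map_eq 1 \<dots> (cl [dD 0, dD 1, sS 1, kK 1])"
    by (rule axR[OF ax_unitR, where pre="[dD 0, dD 1, sS 1, kK 1]" and post="[]" and i=0]) simp_all
  finally show ?thesis .
qed

end

context BH begin

lemma final: "map_eq 1 (lcomp (ltens 1 (lcomp K (lcomp (ltens 1 S lid) \<Delta>)) lid) \<Delta>)
                  (lcomp (ltens 1 lid (lcomp K (lcomp (ltens 1 S lid) \<Delta>))) \<Delta>)"
proof -
  let ?Kt = "lcomp K (lcomp (ltens 1 S lid) \<Delta>)"
  let ?xs = "[dD 0, sS 0, kK 0]"
  have w: "wf 1 ?xs" by simp
  have A1: "map_eq 2 (ltens 1 ?Kt lid) (cl (shift 0 ?xs))"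
  proof -
    have "map_eq 2 (L 0 1 ?Kt) (L 0 1 (cl ?xs))" by (rule L_cong[OF Kt_conv]) simp
    also have "map_eq 2 \<dots> (cl (shift 0 ?xs))" by (rule map_eq_sym[OF cl_shift[OF w]]) simp
    finally show ?thesis by (simp only: ltens_lid_right)
  qed
  have A2: "map_eq 2 (ltens 1 lid ?Kt) (cl (shift 1 ?xs))"
  proof -
    have "map_eq 2 (ltens 1 lid ?Kt) (L 1 1 ?Kt)" by (rule ltl) simp
    also have "map_eq 2 \<dots> (L 1 1 (cl ?xs))" by (rule L_cong[OF Kt_conv]) simp
    also have "map_eq 2 \<dots> (cl (shift 1 ?xs))" by (rule map_eq_sym[OF cl_shift[OF w]]) simp
    finally show ?thesis .
  qed
  have "map_eq 1 (lcomp (ltens 1 ?Kt lid) \<Delta>) (lcomp (cl (shift 0 ?xs)) (L 0 1 \<Delta>))"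
    by (rule lcomp_cong2[OF L0_eq' A1 isL[OF isD, of 0 1 2]]) simp_all
  also have "lcomp (cl (shift 0 ?xs)) (L 0 1 \<Delta>) = cl [dD 0, dD 0, sS 0, kK 0]" by simp
  also have "map_eq 1 \<dots> (cl [dD 0, dD 1, sS 1, kK 1])" by (rule p2b)
  also have "cl [dD 0, dD 1, sS 1, kK 1] = lcomp (cl (shift 1 ?xs)) (L 0 1 \<Delta>)" by simp
  also have "map_eq 1 \<dots> (lcomp (ltens 1 lid ?Kt) \<Delta>)"
    by (rule map_eq_sym, rule lcomp_cong2[OF L0_eq' A2 isL[OF isD, of 0 1 2]]) simp_all
  finally show ?thesis .
qed

end

theorem mainTheorem3:
  fixes \<Delta> \<delta> \<mu> u S \<beta> K :: "'b lmap"
  assumes hopf: "braided_hopf \<Delta> \<delta> \<mu> u S \<beta>"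
    and K_fun: "is_map 2 0 K"
    and K_inv: "beta_inv \<beta> 2 0 K"
    and comm: "map_eq 2 (lcomp (ltens 2 K \<mu>) (Lam \<beta> \<Delta>)) (lcomp (ltens 2 \<mu> K) (Lam \<beta> \<Delta>))"
  shows "map_eq 1 (lcomp (ltens 1 (lcomp K (lcomp (ltens 1 S lid) \<Delta>)) lid) \<Delta>)
                  (lcomp (ltens 1 lid (lcomp K (lcomp (ltens 1 S lid) \<Delta>))) \<Delta>)"
proof -
  interpret BH \<Delta> \<delta> \<mu> u S \<beta> K using assms by unfold_locales
  show ?thesis by (rule final)
qed

end
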